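(* Let $1<r\le 2$ and $r\le s$. Then there exists a constant $C=C(r,s)>0$ such that for every sequence $(J_m)$ of index sets, each of degree at most $m$, and every $n$ with $\frac{n}{e(\log n)^{r'(\frac1r-\frac1s)}}\le m$, $$\widehat{\boldsymbol{\lambda}}\big(\mathcal{P}_{J_m}(\ell_{r,s}^n)\big)\le C^m(\log n)^{m(\frac1r-\frac1s)}.$$ In particular, for such $m,n$, $\boldsymbol{\chi_{\mathrm{mon}}}\big(\mathcal{P}_{J_m}(\ell_{r,s}^n)\big)\le C^m(\log n)^{m(\frac1r-\frac1s)}$ and $\boldsymbol{\lambda}\big(\mathcal{P}_{J_m}(\ell_{r,s}^n)\big)\le C^m(\log n)^{m(\frac1r-\frac1s)}$ (possibly with a larger constant $C$).
   Context: $r'$ is the conjugate exponent of $r$. An index set is a subset of $\mathbb{N}_0^{(\mathbb{N})}$; degree at most $m$ means $|\alpha|\le m$ for all its elements. $\ell_{r,s}^n$ is $\mathbb{C}^n$ with the Lorentz quasi-norm $\|z\|_{\ell_{r,s}}=\|(z_k^*k^{1/r-1/s})_k\|_{\ell_s}$. $\mathcal{P}_J(X_n)$: polynomials $\sum_{\alpha\in J\cap\mathbb{N}_0^n}c_\alpha z^\alpha$ with sup norm over the open unit ball $B_{X_n}$. $c_{X_n}(\alpha)=1/\sup_{z\in B_{X_n}}|z^\alpha|$ and $\widehat{\boldsymbol{\lambda}}(\mathcal{P}_J(X_n))=\sup_{z\in B_{X_n}}\sum_{\alpha\in J}c_{X_n}(\alpha)|z^\alpha|$. $\boldsymbol{\lambda}$: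 projection constant; $\boldsymbol{\chi_{\mathrm{mon}}}$: unconditional basis constant of the monomial basis. *)

theory Defs
  imports "HOL-Analysis.Analysis" "HOL-Library.Extended_Real"
begin

text \<open>Multi-indices: finitely supported functions nat => nat. Points of C^n: functions
  nat => complex vanishing from index n on. The parameter s ranges over (1,\<infinity>] (ereal).\<close>

definition deg :: "(nat \<Rightarrow> nat) \<Rightarrow> nat" where
  "deg \<alpha> = (\<Sum>k\<in>{k. \<alpha> k \<noteq> 0}. \<alpha> k)"

definition is_index_set :: "(nat \<Rightarrow> nat) set \<Rightarrow> bool" where
  "is_index_set J \<longleftrightarrow> (\<forall>\<alpha>\<in>J. finite {k. \<alpha> k \<noteq> 0})"

definition index_cut :: "(nat \<Rightarrow> nat) set \<Rightarrow> nat \<Rightarrow> (nat \<Rightarrow> nat) set" where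
  "index_cut J n = {\<alpha>\<in>J. \<forall>k\<ge>n. \<alpha> k = 0}"

definition monom :: "nat \<Rightarrow> (nat \<Rightarrow> nat) \<Rightarrow> (nat \<Rightarrow> complex) \<Rightarrow> complex" where
  "monom n \<alpha> z = (\<Prod>k<n. z k ^ \<alpha> k)"

definition conj_exp :: "real \<Rightarrow> real" where
  "conj_exp r = r / (r - 1)"

definition inv_s :: "ereal \<Rightarrow> real" where
  "inv_s s = (if s = \<infinity> then 0 else 1 / real_of_ereal s)"

text \<open>decreasing rearrangement z^*_k, for 1 \<le> k \<le> n\<close>
definition decr_rearr :: "nat \<Rightarrow> (nat \<Rightarrow> complex) \<Rightarrow> nat \<Rightarrow> real" where
  "decr_rearr n z k = rev (sort (map (\<lambda>i. cmod (z i)) [0..<n])) ! (k - 1)"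

definition lorentz_norm :: "real \<Rightarrow> ereal \<Rightarrow> nat \<Rightarrow> (nat \<Rightarrow> complex) \<Rightarrow> real" where
  "lorentz_norm r s n z =
     (if s = \<infinity> then Max (insert 0 ((\<lambda>k. decr_rearr n z k * real k powr (1/r)) ` {1..n}))
      else (\<Sum>k=1..n. (decr_rearr n z k * real k powr (1/r - inv_s s)) powr real_of_ereal s)
             powr (inv_s s))"

definition lball :: "real \<Rightarrow> ereal \<Rightarrow> nat \<Rightarrow> (nat \<Rightarrow> complex) set" where
  "lball r s n = {z. (\<forall>k\<ge>n. z k = 0) \<and> lorentz_norm r s n z < 1}"

definition c_coef :: "real \<Rightarrow> ereal \<Rightarrow> nat \<Rightarrow> (nat \<Rightarrow> nat) \<Rightarrow> real" where
  "c_coef r s n \<alpha> = 1 / (SUP z\<in>lball r s n. cmod (monom n \<alpha> z))"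

definition hat_lambda :: "real \<Rightarrow> ereal \<Rightarrow> (nat \<Rightarrow> nat) set \<Rightarrow> nat \<Rightarrow> real" where
  "hat_lambda r s J n =
     (SUP z\<in>lball r s n. \<Sum>\<alpha>\<in>index_cut J n. c_coef r s n \<alpha> * cmod (monom n \<alpha> z))"

definition poly_eval :: "(nat \<Rightarrow> nat) set \<Rightarrow> nat \<Rightarrow> ((nat \<Rightarrow> nat) \<Rightarrow> complex)
    \<Rightarrow> (nat \<Rightarrow> complex) \<Rightarrow> complex" where
  "poly_eval J n c z = (\<Sum>\<alpha>\<in>index_cut J n. c \<alpha> * monom n \<alpha> z)"

definition sup_norm :: "real \<Rightarrow> ereal \<Rightarrow> nat \<Rightarrow> ((nat \<Rightarrow> complex) \<Rightarrow> complex) \<Rightarrow> real" where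
  "sup_norm r s n f = (SUP z\<in>lball r s n. cmod (f z))"

definition chi_mon :: "real \<Rightarrow> ereal \<Rightarrow> (nat \<Rightarrow> nat) set \<Rightarrow> nat \<Rightarrow> real" where
  "chi_mon r s J n = Inf {K. K \<ge> 0 \<and>
     (\<forall>c \<theta>. (\<forall>\<alpha>. cmod (\<theta> \<alpha>) = 1) \<longrightarrow>
        sup_norm r s n (poly_eval J n (\<lambda>\<alpha>. \<theta> \<alpha> * c \<alpha>)) \<le> K * sup_norm r s n (poly_eval J n c))}"

text \<open>projection constant of P_J(\<ell>_{r,s}^n), computed via its isometric copy inside the
  injective space \<ell>_\<infinity>(B) of bounded functions on the open unit ball B\<close>
definition proj_const :: "real \<Rightarrow> ereal \<Rightarrow> (nat \<Rightarrow> nat) set \<Rightarrow> nat \<Rightarrow> real" where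
  "proj_const r s J n = Inf {K. K \<ge> 0 \<and>
     (\<exists>Q :: ((nat \<Rightarrow> complex) \<Rightarrow> complex) \<Rightarrow> ((nat \<Rightarrow> complex) \<Rightarrow> complex).
        (\<forall>f g a b. bdd_above ((\<lambda>z. cmod (f z)) ` lball r s n) \<longrightarrow>
                   bdd_above ((\<lambda>z. cmod (g z)) ` lball r s n) \<longrightarrow>
           (\<forall>z\<in>lball r s n. Q (\<lambda>w. a * f w + b * g w) z = a * Q f z + b * Q g z)) \<and>
        (\<forall>f. bdd_above ((\<lambda>z. cmod (f z)) ` lball r s n) \<longrightarrow>
           (\<exists>c. \<forall>z\<in>lball r s n. Q f z = poly_eval J n c z)) \<and>
        (\<forall>c. \<forall>z\<in>lball r s n. Q (poly_eval J n c) z = poly_eval J n c z) \<and>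
        (\<forall>f. bdd_above ((\<lambda>z. cmod (f z)) ` lball r s n) \<longrightarrow>
           sup_norm r s n (Q f) \<le> K * sup_norm r s n f))}"

end

theory Submission
  imports Defs
begin

definition dlist :: "nat \<Rightarrow> (nat \<Rightarrow> complex) \<Rightarrow> real list" where
  "dlist n z = rev (sort (map (\<lambda>i. cmod (z i)) [0..<n]))"

lemma dlist_len[simp]: "length (dlist n z) = n"
  by (simp add: dlist_def)

lemma decr_dlist: "decr_rearr n z k = dlist n z ! (k - 1)"
  by (simp add: decr_rearr_def dlist_def)

lemma sum_1n: "(\<Sum>k=1..n. h k) = (\<Sum>k<n. h (Suc k))"
  by (induct n) (simp_all add: sum.lessThan_Suc)

lemma dlist_sum: "(\<Sum>k=1..n. g (decr_rearr n z k)) = (\<Sum>i<n. g (cmod (z i)))"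
proof -
  have "(\<Sum>k=1..n. g (decr_rearr n z k)) = (\<Sum>k<n. g (dlist n z ! k))"
    by (subst sum_1n) (simp add: decr_dlist)
  also have "\<dots> = sum_list (map g (dlist n z))"
    by (simp add: sum_list_sum_nth atLeast0LessThan)
  also have "\<dots> = sum_mset (image_mset g (mset (dlist n z)))"
    by (metis mset_map sum_mset_sum_list)
  also have "\<dots> = sum_mset (image_mset g (mset (map (\<lambda>i. cmod (z i)) [0..<n])))"
    by (simp add: dlist_def)
  also have "\<dots> = sum_list (map g (map (\<lambda>i. cmod (z i)) [0..<n]))"
    by (metis mset_map sum_mset_sum_list)
  also have "\<dots> = (\<Sum>i<n. g (cmod (z i)))"
    by (simp add: sum_list_sum_nth atLeast0LessThan)
  finally show ?thesis .
qed

lemma dlist_sum_S: "(\<Sum>k=Suc 0..n. g (decr_rearr n z k)) = (\<Sum>i<n. g (cmod (z i)))"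
  using dlist_sum[of g n z] by simp

lemma decr_mono: assumes "1 \<le> i" "i \<le> j" "j \<le> n"
  shows "decr_rearr n z j \<le> decr_rearr n z i"
proof -
  let ?L = "sort (map (\<lambda>i. cmod (z i)) [0..<n])"
  have s: "sorted ?L" by simp
  have len: "length ?L = n" by simp
  have "decr_rearr n z j = ?L ! (n - 1 - (j - 1))"
    using assms by (simp add: decr_dlist dlist_def rev_nth)
  also have "\<dots> \<le> ?L ! (n - 1 - (i - 1))"
    by (rule sorted_nth_mono[OF s]) (use assms in auto)
  also have "\<dots> = decr_rearr n z i"
    using assms by (simp add: decr_dlist dlist_def rev_nth)
  finally show ?thesis .
qed

lemma decr_nonneg: assumes "1 \<le> k" "k \<le> n" shows "0 \<le> decr_rearr n z k"
proof -
  have "dlist n z ! (k - 1) \<in> set (dlist n z)" using assms by (intro nth_mem) auto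
  then show ?thesis by (auto simp: decr_dlist dlist_def)
qed

lemma decr_max: assumes "i < n" shows "cmod (z i) \<le> decr_rearr n z 1"
proof -
  have "cmod (z i) \<in> set (dlist n z)" using assms by (auto simp: dlist_def)
  then obtain p where p: "p < n" "dlist n z ! p = cmod (z i)"
    by (metis dlist_len in_set_conv_nth)
  have "decr_rearr n z (Suc p) \<le> decr_rearr n z 1"
    by (rule decr_mono) (use p in auto)
  then show ?thesis using p by (simp add: decr_dlist)
qed

lemma decr_cong: assumes "\<And>i. i < n \<Longrightarrow> cmod (u i) = cmod (z i)"
  shows "decr_rearr n u = decr_rearr n z"
proof -
  have "map (\<lambda>i. cmod (u i)) [0..<n] = map (\<lambda>i. cmod (z i)) [0..<n]"
    using assms by (intro map_cong) auto
  then show ?thesis by (intro ext) (simp only: decr_rearr_def)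
qed

lemma lorentz_cong: assumes "\<And>i. i < n \<Longrightarrow> cmod (u i) = cmod (z i)"
  shows "lorentz_norm r s n u = lorentz_norm r s n z"
  using decr_cong[OF assms] by (simp add: lorentz_norm_def)

lemma decr_weak: assumes "1 \<le> k" "k \<le> n" "0 < r"
  shows "real k * decr_rearr n z k powr r \<le> (\<Sum>i<n. cmod (z i) powr r)"
proof -
  have "real k * decr_rearr n z k powr r = (\<Sum>i=1..k. decr_rearr n z k powr r)" by simp
  also have "\<dots> \<le> (\<Sum>i=1..k. decr_rearr n z i powr r)"
  proof (intro sum_mono powr_mono2)
    fix i assume i: "i \<in> {1..k}"
    show "0 \<le> r" using assms by simp
    show "0 \<le> decr_rearr n z k" using assms by (intro decr_nonneg) auto
    show "decr_rearr n z k \<le> decr_rearr n z i" using assms i by (intro decr_mono) auto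
  qed
  also have "\<dots> \<le> (\<Sum>i=1..n. decr_rearr n z i powr r)"
    by (intro sum_mono2) (use assms in auto)
  also have "\<dots> = (\<Sum>i<n. cmod (z i) powr r)" by (rule dlist_sum)
  finally show ?thesis .
qed

lemma holder:
  fixes a b :: "'i \<Rightarrow> real"
  assumes I: "finite I" and pq: "p > 1" "q > 1" "1/p + 1/q = 1"
    and a: "\<And>i. i \<in> I \<Longrightarrow> a i \<ge> 0" and b: "\<And>i. i \<in> I \<Longrightarrow> b i \<ge> 0"
  shows "(\<Sum>i\<in>I. a i * b i) \<le> (\<Sum>i\<in>I. a i powr p) powr (1/p) * (\<Sum>i\<in>I. b i powr q) powr (1/q)"
proof -
  define A where "A = (\<Sum>i\<in>I. a i powr p)"
  define B where "B = (\<Sum>i\<in>I. b i powr q)"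
  have A0: "A \<ge> 0" and B0: "B \<ge> 0" unfolding A_def B_def by (auto intro: sum_nonneg)
  show ?thesis
  proof (cases "A = 0 \<or> B = 0")
    case True
    then have "(\<forall>i\<in>I. a i = 0) \<or> (\<forall>i\<in>I. b i = 0)"
      unfolding A_def B_def using I a b
      by (subst (asm) (1 2) sum_nonneg_eq_0_iff) auto
    then have "(\<Sum>i\<in>I. a i * b i) = 0" by auto
    then show ?thesis by simp
  next
    case False
    then have Ap: "A > 0" and Bp: "B > 0" using A0 B0 by auto
    define \<alpha> where "\<alpha> = A powr (1/p)"
    define \<beta> where "\<beta> = B powr (1/q)"
    have ap: "\<alpha> > 0" "\<beta> > 0" using Ap Bp by (auto simp: \<alpha>_def \<beta>_def)
    have ap2: "\<alpha> powr p = A" "\<beta> powr q = B" using Ap Bp pq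
      by (auto simp: \<alpha>_def \<beta>_def powr_powr)
    have key: "a i * b i \<le> \<alpha> * \<beta> * (a i powr p / (A * p) + b i powr q / (B * q))" if i: "i \<in> I" for i
    proof -
      have "a i * b i = \<alpha> * \<beta> * ((a i / \<alpha>) * (b i / \<beta>))" using ap by simp
      also have "\<dots> \<le> \<alpha> * \<beta> * ((a i / \<alpha>) powr p / p + (b i / \<beta>) powr q / q)"
        using ap a[OF i] b[OF i] pq by (intro mult_left_mono Youngs_inequality) auto
      also have "(a i / \<alpha>) powr p = a i powr p / A"
        using ap a[OF i] ap2 by (simp add: powr_divide)
      also have "(b i / \<beta>) powr q = b i powr q / B"
        using ap b[OF i] ap2 by (simp add: powr_divide)
      finally show ?thesis by (simp add: field_simps)
    qed
    have "(\<Sum>i\<in>I. a i * b i) \<le> (\<Sum>i\<in>I. \<alpha> * \<beta> * (a i powr p / (A * p) + b i powr q / (B * q)))"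
      using key by (rule sum_mono)
    also have "\<dots> = \<alpha> * \<beta> * ((\<Sum>i\<in>I. a i powr p) / (A * p) + (\<Sum>i\<in>I. b i powr q) / (B * q))"
      by (simp only: sum_distrib_left[symmetric] sum.distrib sum_divide_distrib[symmetric])
    also have "\<dots> = \<alpha> * \<beta> * (A / (A * p) + B / (B * q))"
      by (simp only: A_def[symmetric] B_def[symmetric])
    also have "\<dots> = \<alpha> * \<beta>" using Ap Bp pq by simp
    finally show ?thesis by (simp add: \<alpha>_def \<beta>_def A_def B_def)
  qed
qed

lemma harm_bound: "(\<Sum>k=1..n. 1 / real k) \<le> 1 + ln (real n)" if "n \<ge> 1"
  using that
proof (induct n rule: dec_induct)
  case base then show ?case by simp
next
  case (step n)
  have "ln (real n / real (Suc n)) \<le> real n / real (Suc n) - 1"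
    using step by (intro ln_le_minus_one) auto
  also have "\<dots> = - 1 / real (Suc n)" by (simp add: field_simps)
  finally have "1 / real (Suc n) \<le> ln (real (Suc n)) - ln (real n)"
    using step by (simp add: ln_div)
  then show ?case using step by simp
qed

lemma powsum_bound:
  assumes p: "0 \<le> p" "p < 1"
  shows "(\<Sum>k=1..n. real k powr (-p)) \<le> real n powr (1-p) / (1-p)"
proof (induct n)
  case 0 then show ?case by simp
next
  case (Suc n)
  define q where "q = 1 - p"
  have q: "0 < q" "q \<le> 1" using p by (auto simp: q_def)
  define x where "x = real (Suc n)"
  have x: "x \<ge> 1" by (simp add: x_def)
  have step: "(x - 1) powr q \<le> x powr q - q * x powr (-p)"
  proof (cases "n = 0")
    case True then show ?thesis using q by (simp add: x_def)
  next
    case False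
    then have x1: "x - 1 > 0" by (simp add: x_def)
    have "(x - 1) powr q * x powr (1 - q) \<le> q * (x - 1) + (1 - q) * x"
      using Youngs_inequality_0[of q "1-q" "x-1" x] q x1 x by simp
    also have "\<dots> = x - q" by (simp add: algebra_simps)
    finally have h: "(x - 1) powr q * x powr (1 - q) \<le> x - q" .
    have xp: "x powr (1-q) > 0" using x by simp
    have "(x - 1) powr q \<le> (x - q) / x powr (1 - q)"
      using h xp by (simp add: field_simps)
    also have "(x - q) / x powr (1 - q) = x powr q - q * x powr (-p)"
    proof -
      have "x / x powr (1 - q) = x powr q"
        using x by (simp add: powr_diff q_def)
      moreover have "1 / x powr (1 - q) = x powr (-p)"
        using x by (simp add: q_def powr_minus_divide)
      ultimately show ?thesis by (simp add: diff_divide_distrib) (metis times_divide_eq_right mult_1_right)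
    qed
    finally show ?thesis .
  qed
  have "(\<Sum>k=1..Suc n. real k powr (-p)) = (\<Sum>k=1..n. real k powr (-p)) + x powr (-p)"
    by (simp add: x_def)
  also have "\<dots> \<le> real n powr q / q + x powr (-p)"
    using Suc by (simp add: q_def)
  also have "\<dots> \<le> x powr q / q"
  proof -
    have e: "real n = x - 1" by (simp add: x_def)
    have "(x - 1) powr q / q \<le> (x powr q - q * x powr (-p)) / q"
      using divide_right_mono[OF step, of q] q by simp
    also have "\<dots> = x powr q / q - x powr (-p)" using q by (simp add: diff_divide_distrib)
    finally show ?thesis using e by simp
  qed
  finally show ?case by (simp add: q_def x_def)
qed


lemma s_cases: assumes "ereal r \<le> s"
  obtains "s = \<infinity>" | \<sigma> where "s = ereal \<sigma>" "r \<le> \<sigma>"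
  using assms by (cases s) auto

lemma lnorm_inf: "lorentz_norm r \<infinity> n z = Max (insert 0 ((\<lambda>k. decr_rearr n z k * real k powr (1/r)) ` {1..n}))"
  by (simp add: lorentz_norm_def)

lemma lnorm_fin: "lorentz_norm r (ereal \<sigma>) n z =
   (\<Sum>k=1..n. (decr_rearr n z k * real k powr (1/r - 1/\<sigma>)) powr \<sigma>) powr (1/\<sigma>)"
  by (simp add: lorentz_norm_def inv_s_def)

lemma inv_s_fin[simp]: "inv_s (ereal \<sigma>) = 1/\<sigma>" by (simp add: inv_s_def)
lemma inv_s_inf[simp]: "inv_s \<infinity> = 0" by (simp add: inv_s_def)

lemma powr_lt1_imp: fixes x :: real assumes "0 \<le> x" "x powr e < 1" "e > 0" shows "x < 1"
proof (rule ccontr)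
  assume "\<not> x < 1" then have "x \<ge> 1" by simp
  then have "x powr e \<ge> 1" using assms by (simp add: ge_one_powr_ge_zero)
  then show False using assms by simp
qed

lemma powr_lt1: fixes x :: real assumes "0 \<le> x" "x < 1" "e > 0" shows "x powr e < 1"
  using powr_less_mono2[of e x 1] assms by simp

lemma lr_ball:
  assumes r: "r > 1" and rs: "ereal r \<le> s" and z: "\<forall>k\<ge>n. z k = 0"
    and S: "(\<Sum>i<n. cmod (z i) powr r) < 1"
  shows "z \<in> lball r s n"
proof -
  define S where "S = (\<Sum>i<n. cmod (z i) powr r)"
  have S0: "S \<ge> 0" by (simp add: S_def sum_nonneg)
  have S1: "S < 1" using S by (simp add: S_def)
  have w: "real k * decr_rearr n z k powr r \<le> S" if "1 \<le> k" "k \<le> n" for k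
    using decr_weak[OF that] r by (simp add: S_def)
  have dn: "0 \<le> decr_rearr n z k" if "1 \<le> k" "k \<le> n" for k using decr_nonneg[OF that] .
  have "lorentz_norm r s n z < 1"
  proof (cases rule: s_cases[OF rs])
    case 1
    have "Max (insert 0 ((\<lambda>k. decr_rearr n z k * real k powr (1/r)) ` {1..n})) < 1"
    proof (subst Max_less_iff, simp, simp, intro ballI)
      fix y assume "y \<in> insert 0 ((\<lambda>k. decr_rearr n z k * real k powr (1/r)) ` {1..n})"
      then consider "y = 0" | k where "k \<in> {1..n}" "y = decr_rearr n z k * real k powr (1/r)" by auto
      then show "y < 1"
      proof cases
        case 1 then show ?thesis by simp
      next
        case 2
        have d: "0 \<le> decr_rearr n z k" using dn 2 by auto
        have "y powr r = decr_rearr n z k powr r * real k"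
          using 2 r d by (simp add: powr_mult powr_powr)
        also have "\<dots> \<le> S" using w[of k] 2 by (simp add: mult.commute)
        finally have "y powr r < 1" using S1 by simp
        then show ?thesis using 2 d r by (intro powr_lt1_imp[of y r]) auto
      qed
    qed
    then show ?thesis using 1 by (simp add: lnorm_inf)
  next
    case (2 \<sigma>)
    have \<sigma>: "\<sigma> > 1" "r \<le> \<sigma>" using 2 r by auto
    have trm: "(decr_rearr n z k * real k powr (1/r - 1/\<sigma>)) powr \<sigma>
        \<le> decr_rearr n z k powr r * S powr (\<sigma>/r - 1)" if k: "k \<in> {1..n}" for k
    proof -
      define d where "d = decr_rearr n z k"
      have d0: "d \<ge> 0" using dn k by (auto simp: d_def)
      have wk: "d powr r * real k \<le> S" using w[of k] k by (simp add: d_def mult.commute)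
      show ?thesis
      proof (cases "d = 0")
        case True then show ?thesis using \<sigma> by (simp add: d_def[symmetric])
      next
        case False
        then have dp: "d > 0" using d0 by simp
        have kp: "real k > 0" using k by auto
        have e: "\<sigma>/r - 1 \<ge> 0" using \<sigma> r by (simp add: field_simps)
        have "(d * real k powr (1/r - 1/\<sigma>)) powr \<sigma> = d powr \<sigma> * real k powr (\<sigma>/r - 1)"
        proof -
          have "(1/r - 1/\<sigma>) * \<sigma> = \<sigma>/r - 1" using \<sigma> by (simp add: field_simps)
          then show ?thesis using dp kp \<sigma> by (simp add: powr_mult powr_powr)
        qed
        also have "\<dots> = d powr r * (d powr r * real k) powr (\<sigma>/r - 1)"
        proof -
          have "(d powr r * real k) powr (\<sigma>/r - 1) = d powr (\<sigma> - r) * real k powr (\<sigma>/r - 1)"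
            using dp kp r by (simp add: powr_mult powr_powr algebra_simps)
          moreover have "d powr r * d powr (\<sigma> - r) = d powr \<sigma>"
            by (simp add: powr_add[symmetric])
          ultimately show ?thesis by (simp add: mult.assoc[symmetric])
        qed
        also have "\<dots> \<le> d powr r * S powr (\<sigma>/r - 1)"
          using wk e dp kp by (intro mult_left_mono powr_mono2) auto
        finally show ?thesis by (simp add: d_def)
      qed
    qed
    have "(\<Sum>k=1..n. (decr_rearr n z k * real k powr (1/r - 1/\<sigma>)) powr \<sigma>)
        \<le> (\<Sum>k=1..n. decr_rearr n z k powr r * S powr (\<sigma>/r - 1))"
      by (rule sum_mono) (rule trm)
    also have "\<dots> = S * S powr (\<sigma>/r - 1)"
      by (simp add: sum_distrib_right[symmetric] dlist_sum_S[of "\<lambda>x. x powr r"] S_def)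
    also have "\<dots> < 1"
    proof -
      have "S powr (\<sigma>/r - 1) \<le> 1" using S0 S1 \<sigma> r by (intro powr_le1) (auto simp: field_simps)
      then have "S * S powr (\<sigma>/r - 1) \<le> S" using S0 by (simp add: mult_left_le)
      then show ?thesis using S1 by simp
    qed
    finally have X: "(\<Sum>k=1..n. (decr_rearr n z k * real k powr (1/r - 1/\<sigma>)) powr \<sigma>) < 1" .
    have "(\<Sum>k=1..n. (decr_rearr n z k * real k powr (1/r - 1/\<sigma>)) powr \<sigma>) powr (1/\<sigma>) < 1"
      using X \<sigma> by (intro powr_lt1) (auto intro: sum_nonneg)
    then show ?thesis using 2 by (simp add: lnorm_fin)
  qed
  then show ?thesis using z by (simp add: lball_def)
qed


lemma ball_inf_bound:
  assumes "z \<in> lball r \<infinity> n" "k \<in> {1..n}"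
  shows "decr_rearr n z k * real k powr (1/r) < 1"
proof -
  have "decr_rearr n z k * real k powr (1/r) \<le> Max (insert 0 ((\<lambda>k. decr_rearr n z k * real k powr (1/r)) ` {1..n}))"
  proof (rule Max_ge)
    show "finite (insert 0 ((\<lambda>k. decr_rearr n z k * real k powr (1/r)) ` {1..n}))" by simp
    show "decr_rearr n z k * real k powr (1/r) \<in> insert 0 ((\<lambda>k. decr_rearr n z k * real k powr (1/r)) ` {1..n})"
      using assms(2) by blast
  qed
  also have "\<dots> < 1" using assms(1) by (simp add: lball_def lnorm_inf)
  finally show ?thesis .
qed

lemma ball_fin_bound:
  assumes "z \<in> lball r (ereal \<sigma>) n" "\<sigma> > 0"
  shows "(\<Sum>k=1..n. (decr_rearr n z k * real k powr (1/r - 1/\<sigma>)) powr \<sigma>) < 1"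
proof -
  have "(\<Sum>k=1..n. (decr_rearr n z k * real k powr (1/r - 1/\<sigma>)) powr \<sigma>) powr (1/\<sigma>) < 1"
  proof -
    have "lorentz_norm r (ereal \<sigma>) n z < 1" using assms(1) by (simp add: lball_def)
    then show ?thesis by (simp only: lnorm_fin)
  qed
  moreover have "0 \<le> (\<Sum>k=1..n. (decr_rearr n z k * real k powr (1/r - 1/\<sigma>)) powr \<sigma>)"
    by (intro sum_nonneg) simp
  moreover have "1/\<sigma> > 0" using assms(2) by simp
  ultimately show ?thesis using powr_lt1_imp by blast
qed

lemma ball_lr:
  assumes r: "r > 1" and rs: "ereal r \<le> s" and z: "z \<in> lball r s n" and n: "n \<ge> 1"
  shows "(\<Sum>i<n. cmod (z i) powr r) \<le> (1 + ln (real n)) powr (r * (1/r - inv_s s))"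
proof -
  define H where "H = 1 + ln (real n)"
  have H1: "H \<ge> 1" using n by (simp add: H_def)
  have hb: "(\<Sum>k=1..n. 1 / real k) \<le> H" using harm_bound[OF n] by (simp add: H_def)
  have eq: "(\<Sum>i<n. cmod (z i) powr r) = (\<Sum>k=1..n. decr_rearr n z k powr r)"
    by (rule dlist_sum[symmetric])
  have dn: "0 \<le> decr_rearr n z k" if "k \<in> {1..n}" for k using decr_nonneg that by auto
  show ?thesis
  proof (cases rule: s_cases[OF rs])
    case 1
    have "decr_rearr n z k powr r \<le> 1 / real k" if k: "k \<in> {1..n}" for k
    proof -
      have a: "decr_rearr n z k * real k powr (1/r) < 1" using ball_inf_bound z 1 k by simp
      have "(decr_rearr n z k * real k powr (1/r)) powr r \<le> 1"
        using a dn[OF k] r by (intro powr_le1) auto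
      then have "decr_rearr n z k powr r * real k \<le> 1"
        using dn[OF k] r by (simp add: powr_mult powr_powr)
      then show ?thesis using k by (simp add: field_simps)
    qed
    then have "(\<Sum>k=1..n. decr_rearr n z k powr r) \<le> (\<Sum>k=1..n. 1 / real k)" by (rule sum_mono)
    then show ?thesis using eq hb 1 r H1 by (simp add: H_def)
  next
    case (2 \<sigma>)
    have \<sigma>: "\<sigma> > 1" "r \<le> \<sigma>" using 2 r by auto
    have X: "(\<Sum>k=1..n. (decr_rearr n z k * real k powr (1/r - 1/\<sigma>)) powr \<sigma>) < 1"
      using ball_fin_bound[of z r \<sigma> n] z 2 \<sigma> by simp
    show ?thesis
    proof (cases "\<sigma> = r")
      case True
      then show ?thesis using X eq 2 H1 by (simp add: H_def)
    next
      case False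
      then have \<sigma>r: "\<sigma> > r" using \<sigma> by simp
      define b where "b = 1/r - 1/\<sigma>"
      define p where "p = \<sigma> / r"
      define q where "q = \<sigma> / (\<sigma> - r)"
      have pq: "p > 1" "q > 1" "1/p + 1/q = 1" using \<sigma>r r \<sigma>
        by (auto simp: p_def q_def field_simps)
      have brq: "b * r * q = 1" using \<sigma>r r \<sigma> by (simp add: b_def q_def field_simps)
      have q1: "1/q = r * b" using \<sigma>r r \<sigma> by (simp add: b_def q_def field_simps)
      have "(\<Sum>k=1..n. decr_rearr n z k powr r)
          = (\<Sum>k=1..n. ((decr_rearr n z k * real k powr b) powr r) * (real k powr (-(b*r))))"
      proof (rule sum.cong)
        fix k assume k: "k \<in> {1..n}"
        have kp: "real k > 0" using k by auto
        show "decr_rearr n z k powr r = ((decr_rearr n z k * real k powr b) powr r) * (real k powr (-(b*r)))"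
          using dn[OF k] kp by (simp add: powr_mult powr_powr mult.assoc powr_add[symmetric])
      qed simp
      also have "\<dots> \<le> (\<Sum>k=1..n. ((decr_rearr n z k * real k powr b) powr r) powr p) powr (1/p)
                 * (\<Sum>k=1..n. (real k powr (-(b*r))) powr q) powr (1/q)"
        using pq dn by (intro holder) auto
      also have "(\<Sum>k=1..n. ((decr_rearr n z k * real k powr b) powr r) powr p)
               = (\<Sum>k=1..n. (decr_rearr n z k * real k powr b) powr \<sigma>)"
        using r by (simp add: powr_powr p_def)
      also have "(\<Sum>k=1..n. (real k powr (-(b*r))) powr q) = (\<Sum>k=1..n. 1 / real k)"
      proof (rule sum.cong)
        fix k assume k: "k \<in> {1..n}"
        have "(real k powr (-(b*r))) powr q = real k powr (-1)"
          using brq by (simp add: powr_powr)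
        then show "(real k powr (-(b*r))) powr q = 1 / real k" using k by (simp add: powr_minus_divide)
      qed simp
      also have "(\<Sum>k=1..n. (decr_rearr n z k * real k powr b) powr \<sigma>) powr (1/p) \<le> 1"
      proof -
        have "0 \<le> (\<Sum>k=1..n. (decr_rearr n z k * real k powr b) powr \<sigma>)" by (intro sum_nonneg) simp
        then show ?thesis using X pq unfolding b_def by (intro powr_le1) auto
      qed
      also have "(\<Sum>k=1..n. 1 / real k) powr (1/q) \<le> H powr (1/q)"
        using hb pq by (intro powr_mono2) (auto intro!: sum_nonneg)
      finally have "(\<Sum>k=1..n. decr_rearr n z k powr r) \<le> H powr (1/q)"
        using H1 by (simp add: mult_right_mono)
      then show ?thesis using eq q1 2 by (simp add: H_def b_def)
    qed
  qed
qed

definition Dc :: "real \<Rightarrow> ereal \<Rightarrow> real" where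
  "Dc r s = (if s = \<infinity> then r / (r - 1) else
     (1 / (1 - (1/r - 1/real_of_ereal s) * (real_of_ereal s / (real_of_ereal s - 1))))
        powr ((real_of_ereal s - 1) / real_of_ereal s))"

lemma Dc_pos: "Dc r s > 0" if "r > 1" "ereal r \<le> s"
proof (cases rule: s_cases[OF that(2)])
  case 1 then show ?thesis using that by (simp add: Dc_def)
next
  case (2 \<sigma>)
  have \<sigma>: "\<sigma> > 1" "r \<le> \<sigma>" using 2 that by auto
  define c where "c = (1/r - 1/\<sigma>) * (\<sigma> / (\<sigma> - 1))"
  have "c < 1"
    using \<sigma> that by (simp add: field_simps c_def)
  then have "1 / (1 - c) > 0" by simp
  then have "(1 / (1 - c)) powr ((\<sigma> - 1) / \<sigma>) > 0" by simp
  then show ?thesis using 2 by (simp add: Dc_def c_def)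
qed

lemma ball_l1:
  assumes r: "r > 1" and rs: "ereal r \<le> s" and z: "z \<in> lball r s n"
  shows "(\<Sum>i<n. cmod (z i)) \<le> Dc r s * real n powr (1 - 1/r)"
proof -
  have eq: "(\<Sum>i<n. cmod (z i)) = (\<Sum>k=1..n. decr_rearr n z k)"
    using dlist_sum[of "\<lambda>x. x" n z] by simp
  have dn: "0 \<le> decr_rearr n z k" if "k \<in> {1..n}" for k using decr_nonneg that by auto
  show ?thesis
  proof (cases rule: s_cases[OF rs])
    case 1
    have "decr_rearr n z k \<le> real k powr (-(1/r))" if k: "k \<in> {1..n}" for k
    proof -
      have a: "decr_rearr n z k * real k powr (1/r) < 1" using ball_inf_bound z 1 k by simp
      have kp: "real k powr (1/r) > 0" using k by auto
      have "decr_rearr n z k \<le> 1 / real k powr (1/r)" using a kp by (simp add: field_simps)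
      then show ?thesis using k by (simp add: powr_minus_divide)
    qed
    then have "(\<Sum>k=1..n. decr_rearr n z k) \<le> (\<Sum>k=1..n. real k powr (-(1/r)))" by (rule sum_mono)
    also have "\<dots> \<le> real n powr (1 - 1/r) / (1 - 1/r)"
      using r by (intro powsum_bound) auto
    also have "\<dots> = Dc r s * real n powr (1 - 1/r)"
      using 1 r by (simp add: Dc_def field_simps)
    finally show ?thesis using eq by simp
  next
    case (2 \<sigma>)
    have \<sigma>: "\<sigma> > 1" "r \<le> \<sigma>" using 2 r by auto
    have X: "(\<Sum>k=1..n. (decr_rearr n z k * real k powr (1/r - 1/\<sigma>)) powr \<sigma>) < 1"
      using ball_fin_bound[of z r \<sigma> n] z 2 \<sigma> by simp
    define b where "b = 1/r - 1/\<sigma>"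
    define q where "q = \<sigma> / (\<sigma> - 1)"
    define c where "c = b * q"
    have pq: "\<sigma> > 1" "q > 1" "1/\<sigma> + 1/q = 1" using \<sigma> by (auto simp: q_def field_simps)
    have b0: "b \<ge> 0" using \<sigma> r by (simp add: b_def field_simps)
    have c: "0 \<le> c" "c < 1" using \<sigma> r b0 by (auto simp: c_def b_def q_def field_simps)
    have ex: "(1 - c) / q = 1 - 1/r" using \<sigma> r by (simp add: c_def b_def q_def field_simps)
    have "(\<Sum>k=1..n. decr_rearr n z k) = (\<Sum>k=1..n. (decr_rearr n z k * real k powr b) * real k powr (-b))"
    proof (rule sum.cong)
      fix k assume k: "k \<in> {1..n}"
      have kp: "real k > 0" using k by auto
      show "decr_rearr n z k = (decr_rearr n z k * real k powr b) * real k powr (-b)"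
        using kp by (simp add: mult.assoc powr_add[symmetric])
    qed simp
    also have "\<dots> \<le> (\<Sum>k=1..n. (decr_rearr n z k * real k powr b) powr \<sigma>) powr (1/\<sigma>)
                 * (\<Sum>k=1..n. (real k powr (-b)) powr q) powr (1/q)"
      using pq dn by (intro holder) auto
    also have "(\<Sum>k=1..n. (real k powr (-b)) powr q) = (\<Sum>k=1..n. real k powr (-c))"
      by (simp add: powr_powr c_def)
    also have "(\<Sum>k=1..n. (decr_rearr n z k * real k powr b) powr \<sigma>) powr (1/\<sigma>) \<le> 1"
    proof -
      have "0 \<le> (\<Sum>k=1..n. (decr_rearr n z k * real k powr b) powr \<sigma>)" by (intro sum_nonneg) simp
      then show ?thesis using X pq unfolding b_def by (intro powr_le1) auto
    qed
    also have "(\<Sum>k=1..n. real k powr (-c)) powr (1/q) \<le> (real n powr (1-c) / (1-c)) powr (1/q)"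
      using powsum_bound[OF c] pq by (intro powr_mono2) (auto intro!: sum_nonneg)
    also have "(real n powr (1-c) / (1-c)) powr (1/q) = (1/(1-c)) powr (1/q) * real n powr (1 - 1/r)"
    proof -
      have "(real n powr (1-c) / (1-c)) powr (1/q) = (real n powr (1-c)) powr (1/q) / (1-c) powr (1/q)"
        using c by (simp add: powr_divide)
      also have "(real n powr (1-c)) powr (1/q) = real n powr (1 - 1/r)"
        using ex by (simp add: powr_powr)
      finally show ?thesis using c by (simp add: powr_divide)
    qed
    also have "(1/(1-c)) powr (1/q) = Dc r s"
      using 2 \<sigma> by (simp add: Dc_def c_def b_def q_def)
    finally show ?thesis using eq by (simp add: mult_right_mono)
  qed
qed


definition Bx :: "nat \<Rightarrow> nat set \<Rightarrow> (nat \<Rightarrow> nat) set" where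
  "Bx n A = {e. (\<forall>j\<ge>n. e j = 0) \<and> (\<forall>j<n. e j \<in> A)}"

lemma Bx_0: "Bx 0 A = {\<lambda>_. 0}" by (auto simp: Bx_def)

lemma Bx_Suc: "Bx (Suc n) A = (\<lambda>(e, a). e(n := a)) ` (Bx n A \<times> A)"
proof (intro equalityI subsetI)
  fix e assume e: "e \<in> Bx (Suc n) A"
  have "e(n := 0) \<in> Bx n A" using e by (auto simp: Bx_def)
  moreover have "e n \<in> A" using e by (auto simp: Bx_def)
  moreover have "e = (\<lambda>(e, a). e(n := a)) (e(n := 0), e n)" by auto
  ultimately show "e \<in> (\<lambda>(e, a). e(n := a)) ` (Bx n A \<times> A)" by blast
next
  fix e assume "e \<in> (\<lambda>(e, a). e(n := a)) ` (Bx n A \<times> A)"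
  then show "e \<in> Bx (Suc n) A" by (auto simp: Bx_def less_Suc_eq)
qed

lemma Bx_inj: "inj_on (\<lambda>(e, a). e(n := a)) (Bx n A \<times> A)"
proof (rule inj_onI, clarify)
  fix e a e' a' assume h: "e \<in> Bx n A" "a \<in> A" "e' \<in> Bx n A" "a' \<in> A" "e(n := a) = e'(n := a')"
  have "a = a'" using fun_cong[OF h(5), of n] by simp
  moreover have "e = e'"
  proof
    fix j show "e j = e' j"
      using fun_cong[OF h(5), of j] h(1,3) by (cases "j = n") (auto simp: Bx_def)
  qed
  ultimately show "e = e' \<and> a = a'" by simp
qed

lemma Bx_finite: "finite A \<Longrightarrow> finite (Bx n A)"
  by (induct n) (auto simp: Bx_0 Bx_Suc)

lemma Bx_sum_prod:
  fixes h :: "nat \<Rightarrow> nat \<Rightarrow> 'c::comm_semiring_1"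
  assumes "finite A"
  shows "(\<Sum>e\<in>Bx n A. \<Prod>j<n. h j (e j)) = (\<Prod>j<n. \<Sum>a\<in>A. h j a)"
proof (induct n)
  case 0 then show ?case by (simp add: Bx_0)
next
  case (Suc n)
  have "(\<Sum>e\<in>Bx (Suc n) A. \<Prod>j<Suc n. h j (e j))
      = (\<Sum>p\<in>Bx n A \<times> A. \<Prod>j<Suc n. h j (((\<lambda>(e, a). e(n := a)) p) j))"
    by (simp add: Bx_Suc sum.reindex[OF Bx_inj] del: fun_upd_apply)
  also have "\<dots> = (\<Sum>p\<in>Bx n A \<times> A. (\<Prod>j<n. h j (fst p j)) * h n (snd p))"
  proof (rule sum.cong)
    fix p assume "p \<in> Bx n A \<times> A"
    obtain e a where p: "p = (e, a)" by force
    have "(\<Prod>j<n. h j ((e(n := a)) j)) = (\<Prod>j<n. h j (e j))"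
      by (intro prod.cong) auto
    then show "(\<Prod>j<Suc n. h j (((\<lambda>(e, a). e(n := a)) p) j)) = (\<Prod>j<n. h j (fst p j)) * h n (snd p)"
      by (simp add: p prod.lessThan_Suc)
  qed simp
  also have "\<dots> = (\<Sum>e\<in>Bx n A. \<Prod>j<n. h j (e j)) * (\<Sum>a\<in>A. h n a)"
    by (simp add: sum_product sum.cartesian_product case_prod_beta)
  also have "\<dots> = (\<Prod>j<Suc n. \<Sum>a\<in>A. h j a)"
    using Suc by (simp add: prod.lessThan_Suc)
  finally show ?case .
qed

lemma card_Bx: "card (Bx n {..<N}) = N ^ n"
  using Bx_sum_prod[of "{..<N}" "\<lambda>j a. (1::nat)" n] by simp

lemma deg_eq: assumes "\<forall>j\<ge>n. \<alpha> j = 0" shows "deg \<alpha> = (\<Sum>j<n. \<alpha> j)"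
proof -
  have "deg \<alpha> = (\<Sum>k\<in>{k. \<alpha> k \<noteq> 0}. \<alpha> k)" by (simp add: deg_def)
  also have "\<dots> = (\<Sum>j<n. \<alpha> j)"
  proof (rule sum.mono_neutral_left)
    show "{k. \<alpha> k \<noteq> 0} \<subseteq> {..<n}" using assms by (auto simp: not_less[symmetric])
  qed auto
  finally show ?thesis .
qed

lemma cmod_monom: "cmod (monom n \<alpha> z) = (\<Prod>j<n. cmod (z j) ^ \<alpha> j)"
  by (simp add: monom_def prod_norm[symmetric] norm_power)

lemma exp_partial: fixes x :: real assumes "x \<ge> 0"
  shows "(\<Sum>j\<le>N. x ^ j / fact j) \<le> exp x"
proof -
  have s: "(\<lambda>j. x ^ j / fact j) sums exp x"
    using exp_converges[of x] by (simp add: divide_inverse mult.commute scaleR_conv_of_real)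
  have "(\<Sum>j\<le>N. x ^ j / fact j) \<le> suminf (\<lambda>j. x ^ j / fact j)"
    using s assms by (intro sum_le_suminf) (auto simp: sums_summable)
  then show ?thesis using sums_unique[OF s] by simp
qed

lemma pow_fact_le_exp: fixes x :: real assumes "x \<ge> 0"
  shows "x ^ N \<le> exp x * fact N"
proof -
  have "x ^ N / fact N \<le> (\<Sum>j\<le>N. x ^ j / fact j)"
    using assms by (intro member_le_sum) auto
  also have "\<dots> \<le> exp x" by (rule exp_partial[OF assms])
  finally show ?thesis by (simp add: field_simps)
qed


definition wt :: "real \<Rightarrow> nat \<Rightarrow> (nat \<Rightarrow> nat) \<Rightarrow> nat \<Rightarrow> complex" where
  "wt r n \<alpha> = (\<lambda>j. if j < n then complex_of_real ((1/2) * (real (\<alpha> j) / real (deg \<alpha>)) powr (1/r)) else 0)"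

lemma cmod_wt: "j < n \<Longrightarrow> cmod (wt r n \<alpha> j) = (1/2) * (real (\<alpha> j) / real (deg \<alpha>)) powr (1/r)"
  by (simp add: wt_def)

lemma wt_ball:
  assumes r: "r > 1" and rs: "ereal r \<le> s" and \<alpha>: "\<forall>j\<ge>n. \<alpha> j = 0"
  shows "wt r n \<alpha> \<in> lball r s n"
proof (rule lr_ball[OF r rs])
  show "\<forall>k\<ge>n. wt r n \<alpha> k = 0" by (simp add: wt_def)
  have k: "deg \<alpha> = (\<Sum>j<n. \<alpha> j)" by (rule deg_eq[OF \<alpha>])
  have "(\<Sum>i<n. cmod (wt r n \<alpha> i) powr r) = (\<Sum>i<n. (1/2) powr r * (real (\<alpha> i) / real (deg \<alpha>)))"
  proof (rule sum.cong)
    fix i assume "i \<in> {..<n}"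
    then show "cmod (wt r n \<alpha> i) powr r = (1/2) powr r * (real (\<alpha> i) / real (deg \<alpha>))"
    proof -
      have x: "real (\<alpha> i) / real (deg \<alpha>) \<ge> 0" by simp
      have "((1/2) * (real (\<alpha> i) / real (deg \<alpha>)) powr (1/r)) powr r
           = (1/2) powr r * ((real (\<alpha> i) / real (deg \<alpha>)) powr (1/r)) powr r"
        by (rule powr_mult; simp)
      also have "((real (\<alpha> i) / real (deg \<alpha>)) powr (1/r)) powr r = real (\<alpha> i) / real (deg \<alpha>)"
        using r x by (simp add: powr_powr)
      finally show ?thesis using \<open>i \<in> {..<n}\<close> by (simp only: cmod_wt lessThan_iff)
    qed
  qed simp
  also have "\<dots> = (1/2) powr r * (real (\<Sum>i<n. \<alpha> i) / real (deg \<alpha>))"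
    by (simp add: sum_distrib_left[symmetric] sum_divide_distrib[symmetric])
  also have "\<dots> \<le> (1/2) powr r"
    using k by (cases "deg \<alpha> = 0") auto
  also have "\<dots> < 1" using r by (intro powr_lt1) auto
  finally show "(\<Sum>i<n. cmod (wt r n \<alpha> i) powr r) < 1" .
qed

lemma powr_power_comm: fixes x :: real assumes "x \<ge> 0"
  shows "(x powr c) ^ a = (x ^ a) powr c"
proof (cases "x = 0")
  case True then show ?thesis by (cases a) auto
next
  case False
  then have x: "x > 0" using assms by simp
  have "(x powr c) ^ a = x powr (c * a)" using x by (simp add: powr_realpow[symmetric] powr_powr)
  also have "\<dots> = (x ^ a) powr c" using x by (simp add: powr_realpow[symmetric] powr_powr mult.commute)
  finally show ?thesis .
qed

lemma wt_monom_eq: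
  assumes \<alpha>: "\<forall>j\<ge>n. \<alpha> j = 0"
  shows "cmod (monom n \<alpha> (wt r n \<alpha>)) = (1/2) ^ deg \<alpha> * (\<Prod>j<n. (real (\<alpha> j) / real (deg \<alpha>)) ^ \<alpha> j) powr (1/r)"
proof -
  have "cmod (monom n \<alpha> (wt r n \<alpha>)) = (\<Prod>j<n. ((1/2) * (real (\<alpha> j) / real (deg \<alpha>)) powr (1/r)) ^ \<alpha> j)"
    by (simp add: cmod_monom cmod_wt)
  also have "\<dots> = (\<Prod>j<n. (1/2) ^ \<alpha> j * ((real (\<alpha> j) / real (deg \<alpha>)) ^ \<alpha> j) powr (1/r))"
    by (intro prod.cong refl, subst power_mult_distrib) (simp add: powr_power_comm)
  also have "\<dots> = (1/2) ^ (\<Sum>j<n. \<alpha> j) * (\<Prod>j<n. ((real (\<alpha> j) / real (deg \<alpha>)) ^ \<alpha> j) powr (1/r))"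
    by (simp add: prod.distrib power_sum)
  also have "\<dots> = (1/2) ^ deg \<alpha> * (\<Prod>j<n. (real (\<alpha> j) / real (deg \<alpha>)) ^ \<alpha> j) powr (1/r)"
    by (simp add: deg_eq[OF \<alpha>] prod_powr_distrib)
  finally show ?thesis .
qed

lemma prod_ratio_lower:
  assumes \<alpha>: "\<forall>j\<ge>n. \<alpha> j = 0"
  shows "(\<Prod>j<n. fact (\<alpha> j)) / (exp (real (deg \<alpha>)) * fact (deg \<alpha>))
          \<le> (\<Prod>j<n. (real (\<alpha> j) / real (deg \<alpha>)) ^ \<alpha> j)"
proof (cases "deg \<alpha> = 0")
  case True
  then have "\<forall>j<n. \<alpha> j = 0" using deg_eq[OF \<alpha>] by simp
  then show ?thesis using True by simp
next
  case False
  define k where "k = deg \<alpha>"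
  have kp: "real k > 0" using False by (simp add: k_def)
  have "(\<Prod>j<n. (real (\<alpha> j) / real k) ^ \<alpha> j) = (\<Prod>j<n. real (\<alpha> j) ^ \<alpha> j) / (\<Prod>j<n. real k ^ \<alpha> j)"
    by (simp add: power_divide prod_dividef)
  also have "(\<Prod>j<n. real k ^ \<alpha> j) = real k ^ k"
    by (simp add: power_sum[symmetric] k_def deg_eq[OF \<alpha>])
  finally have e: "(\<Prod>j<n. (real (\<alpha> j) / real k) ^ \<alpha> j) = (\<Prod>j<n. real (\<alpha> j) ^ \<alpha> j) / real k ^ k" .
  have f: "(\<Prod>j<n. fact (\<alpha> j)) \<le> (\<Prod>j<n. real (\<alpha> j) ^ \<alpha> j)"
  proof (rule prod_mono)
    fix j assume "j \<in> {..<n}"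
    have "(fact (\<alpha> j) :: real) \<le> of_nat (\<alpha> j ^ \<alpha> j)" by (rule fact_le_power)
    then show "0 \<le> (fact (\<alpha> j) :: real) \<and> fact (\<alpha> j) \<le> real (\<alpha> j) ^ \<alpha> j" by simp
  qed
  have g: "real k ^ k \<le> exp (real k) * fact k" by (rule pow_fact_le_exp) simp
  have "(\<Prod>j<n. fact (\<alpha> j)) / (exp (real k) * fact k) \<le> (\<Prod>j<n. real (\<alpha> j) ^ \<alpha> j) / (exp (real k) * fact k)"
    using f by (intro divide_right_mono) auto
  also have "\<dots> \<le> (\<Prod>j<n. real (\<alpha> j) ^ \<alpha> j) / real k ^ k"
    using g kp by (intro divide_left_mono prod_nonneg) auto
  finally show ?thesis using e by (simp add: k_def)
qed

definition gw :: "real \<Rightarrow> nat \<Rightarrow> (nat \<Rightarrow> nat) \<Rightarrow> real" where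
  "gw r n \<alpha> = 1 / cmod (monom n \<alpha> (wt r n \<alpha>))"

lemma wt_monom_pos:
  assumes \<alpha>: "\<forall>j\<ge>n. \<alpha> j = 0" and r: "r > 0"
  shows "cmod (monom n \<alpha> (wt r n \<alpha>)) \<ge> (1/2) ^ deg \<alpha> * ((\<Prod>j<n. fact (\<alpha> j)) / (exp (real (deg \<alpha>)) * fact (deg \<alpha>))) powr (1/r)"
    and "cmod (monom n \<alpha> (wt r n \<alpha>)) > 0"
proof -
  have Y: "(\<Prod>j<n. fact (\<alpha> j)) / (exp (real (deg \<alpha>)) * fact (deg \<alpha>)) > (0::real)"
    by (intro divide_pos_pos prod_pos mult_pos_pos) auto
  show *: "cmod (monom n \<alpha> (wt r n \<alpha>)) \<ge> (1/2) ^ deg \<alpha> * ((\<Prod>j<n. fact (\<alpha> j)) / (exp (real (deg \<alpha>)) * fact (deg \<alpha>))) powr (1/r)"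
    unfolding wt_monom_eq[OF \<alpha>]
    using r Y by (intro mult_left_mono powr_mono2 prod_ratio_lower[OF \<alpha>]) auto
  have "(1/2) ^ deg \<alpha> * ((\<Prod>j<n. fact (\<alpha> j)) / (exp (real (deg \<alpha>)) * fact (deg \<alpha>))) powr (1/r) > (0::real)"
    using Y by simp
  then show "cmod (monom n \<alpha> (wt r n \<alpha>)) > 0" using * by linarith
qed

lemma gw_bound:
  assumes \<alpha>: "\<forall>j\<ge>n. \<alpha> j = 0" and r: "r > 0"
  shows "gw r n \<alpha> \<le> 2 ^ deg \<alpha> * (exp (real (deg \<alpha>)) * fact (deg \<alpha>) / (\<Prod>j<n. fact (\<alpha> j))) powr (1/r)"
proof -
  define Y :: real where "Y = (\<Prod>j<n. fact (\<alpha> j)) / (exp (real (deg \<alpha>)) * fact (deg \<alpha>))"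
  have Y: "Y > 0" unfolding Y_def by (intro divide_pos_pos prod_pos mult_pos_pos) auto
  have lb: "cmod (monom n \<alpha> (wt r n \<alpha>)) \<ge> (1/2) ^ deg \<alpha> * Y powr (1/r)"
    using wt_monom_pos(1)[OF \<alpha> r] by (simp add: Y_def)
  have pos: "(1/2) ^ deg \<alpha> * Y powr (1/r) > 0" using Y by simp
  have "gw r n \<alpha> \<le> 1 / ((1/2) ^ deg \<alpha> * Y powr (1/r))"
  proof -
    have "0 < cmod (monom n \<alpha> (wt r n \<alpha>))" using lb pos by linarith
    then have "0 < cmod (monom n \<alpha> (wt r n \<alpha>)) * ((1/2) ^ deg \<alpha> * Y powr (1/r))"
      using pos by (rule mult_pos_pos)
    then show ?thesis unfolding gw_def using lb pos by (intro divide_left_mono) auto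
  qed
  also have "\<dots> = 2 ^ deg \<alpha> * (1 / Y) powr (1/r)"
    using Y by (simp add: powr_divide power_one_over)
  also have "1 / Y = exp (real (deg \<alpha>)) * fact (deg \<alpha>) / (\<Prod>j<n. fact (\<alpha> j))"
    by (simp add: Y_def)
  finally show ?thesis .
qed


lemma fact_ge_pow2: "(2::real) ^ (a - 1) \<le> fact a"
proof (induct a)
  case 0 then show ?case by simp
next
  case (Suc a)
  show ?case
  proof (cases "a = 0")
    case True then show ?thesis by simp
  next
    case False
    have "(2::real) ^ (Suc a - 1) = 2 * 2 ^ (a - 1)" using False by (cases a) auto
    also have "\<dots> \<le> 2 * fact a" using Suc by simp
    also have "\<dots> \<le> real (Suc a) * fact a" using False by (intro mult_right_mono) auto
    finally show ?thesis by (simp add: fact_Suc)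
  qed
qed

lemma fact_powr_ge: assumes r: "1 < r" "r \<le> 2" and a: "a \<ge> 1"
  shows "(4/3) ^ (a - 1) \<le> (fact a :: real) powr (1/r)"
proof -
  have f1: "(fact a :: real) \<ge> 1" by simp
  have "(4/3::real) ^ (a - 1) \<le> sqrt 2 ^ (a - 1)"
  proof (rule power_mono)
    have "(4/3::real) = sqrt (16/9)" by (simp add: real_sqrt_divide)
    also have "\<dots> \<le> sqrt 2" by simp
    finally show "(4/3::real) \<le> sqrt 2" .
  qed simp
  also have "sqrt 2 ^ (a - 1) = ((2::real) ^ (a - 1)) powr (1/2)"
    by (simp add: powr_half_sqrt[symmetric] powr_power_comm)
  also have "\<dots> \<le> (fact a) powr (1/2)"
    by (intro powr_mono2 fact_ge_pow2) auto
  also have "\<dots> \<le> (fact a) powr (1/r)"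
    using r f1 by (intro powr_mono) (auto simp: field_simps)
  finally show ?thesis .
qed

lemma F_bound:
  fixes u :: real
  assumes r: "1 < r" "r \<le> 2" and u: "u \<ge> 0"
  shows "(\<Sum>a\<le>M. u ^ a / (fact a) powr (1/r)) \<le> exp (5 * (u + u powr r))"
proof (cases "u \<le> 1")
  case True
  have "(\<Sum>a\<le>M. u ^ a / (fact a) powr (1/r)) = 1 + (\<Sum>a\<in>{1..M}. u ^ a / (fact a) powr (1/r))"
  proof -
    have "{..M} = insert 0 {1..M}" by auto
    then show ?thesis by simp
  qed
  also have "(\<Sum>a\<in>{1..M}. u ^ a / (fact a) powr (1/r)) \<le> (\<Sum>a\<in>{1..M}. u * (3/4) ^ (a - 1))"
  proof (rule sum_mono)
    fix a assume a: "a \<in> {1..M}"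
    have "u ^ a = u * u ^ (a - 1)" using a by (cases a) auto
    also have "\<dots> \<le> u" using True u by (simp add: mult_left_le power_le_one)
    finally have ua: "u ^ a \<le> u" .
    have fp: "(4/3) ^ (a - 1) \<le> (fact a :: real) powr (1/r)" using fact_powr_ge[OF r] a by simp
    have "u ^ a / (fact a) powr (1/r) \<le> u / (4/3) ^ (a - 1)"
      using ua fp u by (intro frac_le) auto
    also have "\<dots> = u * (3/4) ^ (a - 1)" by (simp add: power_divide field_simps)
    finally show "u ^ a / (fact a) powr (1/r) \<le> u * (3/4) ^ (a - 1)" .
  qed
  also have "(\<Sum>a\<in>{1..M}. u * (3/4::real) ^ (a - 1)) = u * (\<Sum>i<M. (3/4) ^ i)"
  proof -
    have "(\<Sum>a\<in>{1..M}. (3/4::real) ^ (a - 1)) = (\<Sum>i<M. (3/4) ^ i)"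
      using sum_1n[of "\<lambda>a. (3/4::real) ^ (a - 1)" M] by simp
    then show ?thesis by (simp add: sum_distrib_left[symmetric])
  qed
  also have "(\<Sum>i<M. (3/4::real) ^ i) \<le> 4"
  proof -
    have "(\<Sum>i<M. (3/4::real) ^ i) = (1 - (3/4) ^ M) / (1 - 3/4)" by (simp add: sum_gp_strict)
    also have "\<dots> \<le> 4" by simp
    finally show ?thesis .
  qed
  finally have "(\<Sum>a\<le>M. u ^ a / (fact a) powr (1/r)) \<le> 1 + u * 4" using u by (simp add: mult_left_mono)
  also have "\<dots> \<le> exp (4 * u)" using exp_ge_add_one_self[of "4*u"] by (simp add: mult.commute)
  also have "\<dots> \<le> exp (5 * (u + u powr r))" using u by simp
  finally show ?thesis .
next
  case False
  then have u1: "u \<ge> 1" by simp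
  define v where "v = (2 * u) powr r"
  have v0: "v \<ge> 0" by (simp add: v_def)
  have trm: "u ^ a / (fact a) powr (1/r) \<le> (1/2) ^ a + v ^ a / fact a" for a
  proof -
    define X where "X = v ^ a / fact a"
    have X0: "X \<ge> 0" using v0 by (simp add: X_def)
    have XP: "X powr (1/r) = (2 * u) ^ a / (fact a) powr (1/r)"
    proof -
      have "v ^ a = ((2 * u) ^ a) powr r" unfolding v_def using u by (simp add: powr_power_comm)
      then have "X powr (1/r) = (((2 * u) ^ a) powr r) powr (1/r) / (fact a) powr (1/r)"
        unfolding X_def by (simp add: powr_divide)
      also have "(((2 * u) ^ a) powr r) powr (1/r) = (2 * u) ^ a"
        using r u by (simp add: powr_powr)
      finally show ?thesis .
    qed
    have Xle: "X powr (1/r) \<le> 1 + X"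
    proof (cases "X \<le> 1")
      case True
      then have "X powr (1/r) \<le> 1" using X0 r by (intro powr_le1) auto
      then show ?thesis using X0 by simp
    next
      case False
      then have "X powr (1/r) \<le> X powr 1" using r by (intro powr_mono) auto
      then show ?thesis using X0 by simp
    qed
    have "u ^ a / (fact a) powr (1/r) = (1/2) ^ a * X powr (1/r)"
      by (simp add: XP power_mult_distrib power_divide)
    also have "\<dots> \<le> (1/2) ^ a * (1 + X)" using Xle by (intro mult_left_mono) auto
    also have "\<dots> \<le> (1/2) ^ a + X"
    proof -
      have "(1/2::real) ^ a * X \<le> X" using X0 by (intro mult_left_le_one_le) (auto intro: power_le_one)
      then show ?thesis by (simp add: distrib_left)
    qed
    finally show ?thesis by (simp add: X_def)
  qed
  have "(\<Sum>a\<le>M. u ^ a / (fact a) powr (1/r)) \<le> (\<Sum>a\<le>M. (1/2) ^ a + v ^ a / fact a)"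
    by (intro sum_mono trm)
  also have "\<dots> = (\<Sum>a\<le>M. (1/2::real) ^ a) + (\<Sum>a\<le>M. v ^ a / fact a)" by (simp add: sum.distrib)
  also have "(\<Sum>a\<le>M. (1/2::real) ^ a) \<le> 2"
  proof -
    have "(\<Sum>a\<le>M. (1/2::real) ^ a) = (\<Sum>a<Suc M. (1/2) ^ a)" by (simp add: lessThan_Suc_atMost)
    also have "\<dots> = (1 - (1/2) ^ Suc M) / (1 - 1/2)" by (simp add: sum_gp_strict)
    also have "\<dots> \<le> 2" by simp
    finally show ?thesis .
  qed
  also have "(\<Sum>a\<le>M. v ^ a / fact a) \<le> exp v" by (rule exp_partial[OF v0])
  also have "exp v \<le> exp (4 * u powr r)"
  proof -
    have "v = 2 powr r * u powr r" using u by (simp add: v_def powr_mult)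
    also have "2 powr r \<le> 2 powr 2" using r by (intro powr_mono) auto
    then have "2 powr r * u powr r \<le> 4 * u powr r" by (intro mult_right_mono) auto
    finally show ?thesis by simp
  qed
  also have "2 + exp (4 * u powr r) \<le> exp (5 * u powr r)"
  proof -
    define w where "w = u powr r"
    have w1: "w \<ge> 1" using u1 r by (simp add: w_def ge_one_powr_ge_zero)
    have "exp (4 * w) \<ge> 5" using exp_ge_add_one_self[of "4 * w"] w1 by linarith
    moreover have "exp w \<ge> 2" using exp_ge_add_one_self[of w] w1 by linarith
    ultimately have "exp (4 * w) * 2 \<le> exp (4 * w) * exp w" by (intro mult_left_mono) auto
    then have "2 + exp (4 * w) \<le> exp (4 * w) * exp w" using \<open>exp (4 * w) \<ge> 5\<close> by linarith
    also have "\<dots> = exp (5 * w)" by (simp add: exp_add[symmetric])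
    finally show ?thesis by (simp add: w_def)
  qed
  also have "exp (5 * u powr r) \<le> exp (5 * (u + u powr r))" using u by simp
  finally show ?thesis by simp
qed


lemma ln_ge_half: assumes "n \<ge> 2" shows "ln (real n) \<ge> 1/2"
proof -
  have e: "exp (1/2::real) * exp (1/2) = exp 1" by (simp add: exp_add[symmetric])
  have "exp (1/2::real) \<le> 2"
  proof (rule ccontr)
    assume "\<not> exp (1/2::real) \<le> 2"
    then have "exp (1/2::real) > 2" by simp
    then have "exp (1/2::real) * exp (1/2) > 2 * 2" by (intro mult_strict_mono) auto
    then show False using e e_less_272 by simp
  qed
  also have "2 \<le> real n" using assms by simp
  finally have "exp (1/2) \<le> real n" .
  then show ?thesis using assms by (subst ln_ge_iff) auto
qed

definition bb :: "real \<Rightarrow> ereal \<Rightarrow> real" where "bb r s = 1/r - inv_s s"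

lemma bb_props: assumes r: "r > 1" and rs: "ereal r \<le> s"
  shows "0 \<le> bb r s" "r * bb r s \<le> 1" "bb r s \<le> 1" "conj_exp r * bb r s * (1 - 1/r) = bb r s"
proof -
  have i: "0 \<le> inv_s s \<and> inv_s s \<le> 1/r"
  proof (cases rule: s_cases[OF rs])
    case 1 then show ?thesis using r by simp
  next
    case (2 \<sigma>) then show ?thesis using r by (simp add: field_simps)
  qed
  show "0 \<le> bb r s" using i by (simp add: bb_def)
  show "r * bb r s \<le> 1" using i r by (simp add: bb_def field_simps)
  have "1/r \<le> 1" using r by simp
  then show "bb r s \<le> 1" using i unfolding bb_def by linarith
  show "conj_exp r * bb r s * (1 - 1/r) = bb r s" using r by (simp add: conj_exp_def field_simps)
qed

lemma K2:
  fixes L b :: real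
  assumes r: "r > 1" and b: "conj_exp r * b * (1 - 1/r) = b" and L: "L > 0" and m: "m \<ge> 1"
    and hyp: "real n \<le> exp 1 * L powr (conj_exp r * b) * real m"
  shows "real m powr (1/r) / L powr b * real n powr (1 - 1/r) \<le> exp 1 * real m"
proof -
  have e1: "1 - 1/r \<ge> 0" using r by simp
  have "real n powr (1 - 1/r) \<le> (exp 1 * L powr (conj_exp r * b) * real m) powr (1 - 1/r)"
    using hyp e1 by (intro powr_mono2) auto
  also have "\<dots> = (exp 1 * L powr (conj_exp r * b)) powr (1-1/r) * real m powr (1-1/r)"
    by (rule powr_mult; simp)
  also have "(exp 1 * L powr (conj_exp r * b)) powr (1-1/r) = exp 1 powr (1-1/r) * (L powr (conj_exp r * b)) powr (1-1/r)"
    by (rule powr_mult; simp)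
  also have "(L powr (conj_exp r * b)) powr (1-1/r) = L powr b"
    by (simp only: powr_powr b)
  finally have A: "real n powr (1 - 1/r) \<le> exp 1 powr (1 - 1/r) * L powr b * real m powr (1 - 1/r)" .
  have Lb: "L powr b > 0" using L by simp
  have "real m powr (1/r) / L powr b * real n powr (1 - 1/r)
      \<le> real m powr (1/r) / L powr b * (exp 1 powr (1 - 1/r) * L powr b * real m powr (1 - 1/r))"
    using A Lb by (intro mult_left_mono) auto
  also have "\<dots> = exp 1 powr (1 - 1/r) * (real m powr (1/r) * real m powr (1 - 1/r))"
    using Lb by (simp add: field_simps)
  also have "real m powr (1/r) * real m powr (1 - 1/r) = real m"
    using m by (simp add: powr_add[symmetric])
  also have "exp 1 powr (1 - 1/r) \<le> exp 1 powr 1"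
    using r by (intro powr_mono) auto
  then have "exp 1 powr (1 - 1/r) * real m \<le> exp 1 * real m" by (intro mult_right_mono) auto
  finally show ?thesis .
qed

lemma K3:
  fixes L b :: real
  assumes r: "r > 1" and b0: "0 \<le> b" and rb: "r * b \<le> 1" and L: "L \<ge> 1/2"
  shows "(real m powr (1/r) / L powr b) powr r * (1 + L) powr (r * b) \<le> 3 * real m"
proof -
  have Lp: "L > 0" using L by simp
  have "(real m powr (1/r) / L powr b) powr r = real m / L powr (r * b)"
    using r Lp by (simp add: powr_divide powr_powr mult.commute)
  then have E: "(real m powr (1/r) / L powr b) powr r * (1 + L) powr (r * b) = real m * ((1 + L) / L) powr (r * b)"
    using Lp by (simp add: powr_divide)
  have "((1 + L) / L) powr (r * b) \<le> ((1 + L) / L) powr 1"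
    using Lp rb b0 r by (intro powr_mono) (auto simp: field_simps)
  also have "((1 + L) / L) powr 1 \<le> 3" using L Lp by (simp add: field_simps)
  finally have "((1 + L) / L) powr (r * b) \<le> 3" .
  then have "real m * ((1 + L) / L) powr (r * b) \<le> real m * 3" by (intro mult_left_mono) auto
  then show ?thesis using E by simp
qed

lemma K4:
  fixes L b :: real
  assumes L: "L \<ge> 1/2" and b: "0 \<le> b" "b \<le> 1" and k: "k \<le> m"
  shows "(L powr b) ^ k \<le> 2 ^ m * (L powr b) ^ m"
proof -
  have Lp: "L > 0" using L by simp
  define y where "y = L powr b"
  have y0: "y \<ge> 0" by (simp add: y_def)
  have two: "(1::real) \<le> 2 ^ m" by (rule one_le_power) simp
  show ?thesis
  proof (cases "L \<ge> 1")
    case True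
    have "1 powr b \<le> L powr b" using b True by (intro powr_mono2) auto
    then have y1: "y \<ge> 1" by (simp add: y_def)
    have "y ^ k \<le> y ^ m" using k y1 by (rule power_increasing)
    also have "\<dots> \<le> 2 ^ m * y ^ m" using mult_right_mono[OF two, of "y ^ m"] y0 by simp
    finally show ?thesis by (simp add: y_def)
  next
    case False
    have "L powr b \<le> 1 powr b" using b False Lp by (intro powr_mono2) auto
    then have y1: "y \<le> 1" by (simp add: y_def)
    have "y ^ k \<le> 1" using y0 y1 by (rule power_le_one)
    also have "1 \<le> 2 ^ m * y ^ m"
    proof -
      have "(1/2) powr b \<le> L powr b" using L b by (intro powr_mono2) auto
      moreover have "(1/2::real) powr 1 \<le> (1/2) powr b" by (rule powr_mono') (use b in auto)
      ultimately have yh: "y \<ge> 1/2" by (simp add: y_def)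
      have "(1/2::real) ^ m \<le> y ^ m" using yh by (rule power_mono) auto
      then have "2 ^ m * (1/2::real) ^ m \<le> 2 ^ m * y ^ m" by (intro mult_left_mono) auto
      moreover have "(2::real) ^ m * (1/2) ^ m = 1" by (simp add: power_one_over)
      ultimately show ?thesis by simp
    qed
    finally show ?thesis by (simp add: y_def)
  qed
qed


definition Cst :: "real \<Rightarrow> ereal \<Rightarrow> real" where
  "Cst r s = 4 * exp 1 * exp (5 * (Dc r s * exp 1 + 3))"

lemma Cst_pos: "Cst r s > 0" by (simp add: Cst_def)

lemma per_alpha:
  fixes z :: "nat \<Rightarrow> complex" and L t b :: real
  assumes r: "1 < r" and \<alpha>: "\<forall>j\<ge>n. \<alpha> j = 0" and dm: "deg \<alpha> \<le> m" and m: "m \<ge> 1"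
    and L: "L \<ge> 1/2" and b: "0 \<le> b" "b \<le> 1" and t: "t = real m powr (1/r) / L powr b"
  shows "gw r n \<alpha> * cmod (monom n \<alpha> z)
     \<le> (4 * exp 1) ^ m * (L powr b) ^ m * (\<Prod>j<n. (t * cmod (z j)) ^ \<alpha> j / (fact (\<alpha> j)) powr (1/r))"
proof -
  define k where "k = deg \<alpha>"
  have kdef: "k = (\<Sum>j<n. \<alpha> j)" using deg_eq[OF \<alpha>] by (simp add: k_def)
  have km: "k \<le> m" using dm by (simp add: k_def)
  have Lp: "L > 0" using L by simp
  have Lb: "L powr b > 0" using Lp by simp
  have mp: "real m > 0" using m by simp
  have tp: "t > 0" using t mp Lb by simp
  define PF :: real where "PF = (\<Prod>j<n. fact (\<alpha> j))"
  have PFp: "PF > 0" unfolding PF_def by (intro prod_pos) auto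
  define P :: real where "P = (\<Prod>j<n. cmod (z j) ^ \<alpha> j / (fact (\<alpha> j)) powr (1/r))"
  have P0: "P \<ge> 0" unfolding P_def by (intro prod_nonneg) auto
  have Q: "(\<Prod>j<n. (t * cmod (z j)) ^ \<alpha> j / (fact (\<alpha> j)) powr (1/r)) = t ^ k * P"
  proof -
    have "(\<Prod>j<n. (t * cmod (z j)) ^ \<alpha> j / (fact (\<alpha> j)) powr (1/r))
        = (\<Prod>j<n. t ^ \<alpha> j * (cmod (z j) ^ \<alpha> j / (fact (\<alpha> j)) powr (1/r)))"
      by (intro prod.cong refl) (simp add: power_mult_distrib)
    also have "\<dots> = t ^ k * P" by (simp only: prod.distrib power_sum[symmetric] P_def[symmetric] kdef[symmetric])
    finally show ?thesis .
  qed
  have mon: "cmod (monom n \<alpha> z) / PF powr (1/r) = P"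
    by (simp add: cmod_monom P_def PF_def prod_powr_distrib prod_dividef)
  have g: "gw r n \<alpha> \<le> 2 ^ k * (exp (real k) * fact k / PF) powr (1/r)"
    using gw_bound[OF \<alpha>] r by (simp add: k_def PF_def)
  have e1: "(exp (real k) * fact k / PF) powr (1/r) = exp (real k) powr (1/r) * (fact k) powr (1/r) / PF powr (1/r)"
    using PFp by (simp add: powr_divide powr_mult)
  have e2: "exp (real k) powr (1/r) \<le> exp 1 ^ k"
  proof -
    have "exp (real k) powr (1/r) \<le> exp (real k) powr 1" using r by (intro powr_mono) auto
    then show ?thesis by (simp add: exp_of_nat_mult[symmetric])
  qed
  have e3: "(fact k :: real) powr (1/r) \<le> (real m powr (1/r)) ^ k"
  proof -
    have "(fact k :: real) \<le> real k ^ k" using fact_le_power[of k] by simp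
    also have "\<dots> \<le> real m ^ k" using km by (intro power_mono) auto
    finally have "(fact k :: real) powr (1/r) \<le> (real m ^ k) powr (1/r)" using r by (intro powr_mono2) auto
    also have "\<dots> = (real m powr (1/r)) ^ k" by (simp add: powr_power_comm)
    finally show ?thesis .
  qed
  have "gw r n \<alpha> * cmod (monom n \<alpha> z) \<le> 2 ^ k * (exp (real k) * fact k / PF) powr (1/r) * cmod (monom n \<alpha> z)"
    using g by (intro mult_right_mono) auto
  also have "\<dots> = 2 ^ k * exp (real k) powr (1/r) * (fact k) powr (1/r) * P"
    using e1 mon[symmetric] by (simp add: field_simps)
  also have "\<dots> \<le> 2 ^ k * exp 1 ^ k * (real m powr (1/r)) ^ k * P"
    using e2 e3 P0 by (intro mult_right_mono mult_mono mult_left_mono) auto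
  also have "(real m powr (1/r)) ^ k = (L powr b) ^ k * t ^ k"
    using t Lb by (simp add: power_divide)
  also have "2 ^ k * exp 1 ^ k * ((L powr b) ^ k * t ^ k) * P = (2 * exp 1) ^ k * (L powr b) ^ k * (t ^ k * P)"
    by (simp add: power_mult_distrib)
  also have "\<dots> \<le> (2 * exp 1) ^ m * (2 ^ m * (L powr b) ^ m) * (t ^ k * P)"
  proof (intro mult_right_mono mult_mono)
    show "(2 * exp 1) ^ k \<le> (2 * exp 1 :: real) ^ m"
    proof (rule power_increasing[OF km])
      have "(1::real) \<le> exp 1" by simp
      then show "(1::real) \<le> 2 * exp 1" by linarith
    qed
    show "(L powr b) ^ k \<le> 2 ^ m * (L powr b) ^ m" using K4[OF L b km] .
  qed (use P0 tp in auto)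
  also have "\<dots> = (4 * exp 1) ^ m * (L powr b) ^ m * (t ^ k * P)"
  proof -
    have "(4::real) ^ m = 2 ^ m * 2 ^ m" by (simp add: power_mult_distrib[symmetric])
    then show ?thesis by (simp add: power_mult_distrib)
  qed
  finally show ?thesis using Q by simp
qed


lemma main_est:
  fixes z :: "nat \<Rightarrow> complex"
  assumes r: "1 < r" "r \<le> 2" and rs: "ereal r \<le> s" and n: "n \<ge> 2" and m: "m \<ge> 1"
    and z: "z \<in> lball r s n"
    and hyp: "real n \<le> exp 1 * ln (real n) powr (conj_exp r * bb r s) * real m"
    and I: "I \<subseteq> {\<alpha>. (\<forall>j\<ge>n. \<alpha> j = 0) \<and> deg \<alpha> \<le> m}"
  shows "(\<Sum>\<alpha>\<in>I. gw r n \<alpha> * cmod (monom n \<alpha> z)) \<le> Cst r s ^ m * (ln (real n) powr bb r s) ^ m"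
proof -
  define b where "b = bb r s"
  define L where "L = ln (real n)"
  have L: "L \<ge> 1/2" using ln_ge_half[OF n] by (simp add: L_def)
  have Lp: "L > 0" using L by simp
  have bp: "0 \<le> b" "r * b \<le> 1" "b \<le> 1" "conj_exp r * b * (1 - 1/r) = b"
    using bb_props[OF r(1) rs] by (auto simp: b_def)
  define t where "t = real m powr (1/r) / L powr b"
  have tp: "t > 0" using m Lp by (simp add: t_def)
  define u where "u = (\<lambda>j. t * cmod (z j))"
  have u0: "u j \<ge> 0" for j using tp by (simp add: u_def)
  define Q where "Q = (\<lambda>\<alpha>. \<Prod>j<n. u j ^ \<alpha> j / (fact (\<alpha> j)) powr (1/r))"
  have Q0: "Q \<alpha> \<ge> 0" for \<alpha> unfolding Q_def using u0 by (intro prod_nonneg) auto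
  define K0 where "K0 = (4 * exp 1) ^ m * (L powr b) ^ m"
  have K00: "K0 \<ge> 0" by (simp add: K0_def)
  have IB: "I \<subseteq> Bx n {..m}"
  proof
    fix \<alpha> assume "\<alpha> \<in> I"
    then have a: "\<forall>j\<ge>n. \<alpha> j = 0" "deg \<alpha> \<le> m" using I by auto
    have "\<alpha> j \<le> m" if "j < n" for j
    proof -
      have "\<alpha> j \<le> (\<Sum>j<n. \<alpha> j)" using that by (intro member_le_sum) auto
      then show ?thesis using a deg_eq[OF a(1)] by simp
    qed
    then show "\<alpha> \<in> Bx n {..m}" using a by (auto simp: Bx_def)
  qed
  have fB: "finite (Bx n {..m})" by (rule Bx_finite) simp
  have "(\<Sum>\<alpha>\<in>I. gw r n \<alpha> * cmod (monom n \<alpha> z)) \<le> (\<Sum>\<alpha>\<in>I. K0 * Q \<alpha>)"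
  proof (rule sum_mono)
    fix \<alpha> assume "\<alpha> \<in> I"
    then have a: "\<forall>j\<ge>n. \<alpha> j = 0" "deg \<alpha> \<le> m" using I by auto
    show "gw r n \<alpha> * cmod (monom n \<alpha> z) \<le> K0 * Q \<alpha>"
      using per_alpha[OF r(1) a(1) a(2) m L bp(1) bp(3) t_def] by (simp add: K0_def Q_def u_def)
  qed
  also have "\<dots> \<le> (\<Sum>\<alpha>\<in>Bx n {..m}. K0 * Q \<alpha>)"
    using IB fB K00 Q0 by (intro sum_mono2) auto
  also have "\<dots> = K0 * (\<Prod>j<n. \<Sum>a\<le>m. u j ^ a / (fact a) powr (1/r))"
    using Bx_sum_prod[of "{..m}" "\<lambda>j a. u j ^ a / (fact a) powr (1/r)" n]
    by (simp add: sum_distrib_left[symmetric] Q_def)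
  also have "(\<Prod>j<n. \<Sum>a\<le>m. u j ^ a / (fact a) powr (1/r)) \<le> (\<Prod>j<n. exp (5 * (u j + u j powr r)))"
  proof (rule prod_mono)
    fix j assume "j \<in> {..<n}"
    have "0 \<le> (\<Sum>a\<le>m. u j ^ a / (fact a) powr (1/r))" using u0[of j] by (intro sum_nonneg) auto
    then show "0 \<le> (\<Sum>a\<le>m. u j ^ a / (fact a) powr (1/r)) \<and>
      (\<Sum>a\<le>m. u j ^ a / (fact a) powr (1/r)) \<le> exp (5 * (u j + u j powr r))"
      using F_bound[OF r u0[of j]] by simp
  qed
  also have "\<dots> = exp (5 * ((\<Sum>j<n. u j) + (\<Sum>j<n. u j powr r)))"
    by (simp add: exp_sum[symmetric] sum_distrib_left sum.distrib)
  also have "(\<Sum>j<n. u j) \<le> Dc r s * exp 1 * real m"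
  proof -
    have "(\<Sum>j<n. u j) = t * (\<Sum>j<n. cmod (z j))" by (simp add: u_def sum_distrib_left)
    also have "\<dots> \<le> t * (Dc r s * real n powr (1 - 1/r))"
      using ball_l1[OF r(1) rs z] tp by (intro mult_left_mono) auto
    also have "\<dots> = Dc r s * (t * real n powr (1 - 1/r))" by simp
    also have "\<dots> \<le> Dc r s * (exp 1 * real m)"
      using K2[OF r(1) bp(4) Lp m] hyp Dc_pos[OF r(1) rs] unfolding t_def L_def b_def
      by (intro mult_left_mono) auto
    finally show ?thesis by simp
  qed
  also have "(\<Sum>j<n. u j powr r) \<le> 3 * real m"
  proof -
    have "(\<Sum>j<n. u j powr r) = t powr r * (\<Sum>j<n. cmod (z j) powr r)"
      using tp by (simp add: u_def sum_distrib_left powr_mult)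
    also have "\<dots> \<le> t powr r * (1 + L) powr (r * b)"
      using ball_lr[OF r(1) rs z] n tp by (intro mult_left_mono) (auto simp: L_def b_def bb_def)
    also have "\<dots> \<le> 3 * real m"
      using K3[OF r(1) bp(1) bp(2) L] by (simp add: t_def)
    finally show ?thesis .
  qed
  finally have "(\<Sum>\<alpha>\<in>I. gw r n \<alpha> * cmod (monom n \<alpha> z)) \<le> K0 * exp (5 * (Dc r s * exp 1 * real m + 3 * real m))"
    using K00 by (simp add: mult_left_mono)
  also have "exp (5 * (Dc r s * exp 1 * real m + 3 * real m)) = exp (5 * (Dc r s * exp 1 + 3)) ^ m"
    by (simp add: exp_of_nat_mult[symmetric] algebra_simps)
  also have "K0 * exp (5 * (Dc r s * exp 1 + 3)) ^ m = Cst r s ^ m * (ln (real n) powr bb r s) ^ m"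
    by (simp add: K0_def Cst_def power_mult_distrib L_def b_def)
  finally show ?thesis .
qed


definition zeta :: "nat \<Rightarrow> complex" where
  "zeta N = exp (2 * complex_of_real pi * \<i> / of_nat N)"

lemma zeta_pow: "zeta N ^ d = exp (2 * complex_of_real pi * \<i> * of_nat d / of_nat N)"
proof -
  have "zeta N ^ d = exp (of_nat d * (2 * complex_of_real pi * \<i> / of_nat N))"
    by (simp only: zeta_def exp_of_nat_mult[symmetric])
  also have "of_nat d * (2 * complex_of_real pi * \<i> / of_nat N) = 2 * complex_of_real pi * \<i> * of_nat d / of_nat N"
    by simp
  finally show ?thesis .
qed

lemma zeta_norm1[simp]: "cmod (zeta N) = 1"
  by (simp add: zeta_def norm_exp_eq_Re)

lemma zeta_norm: "cmod (zeta N ^ d) = 1"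
  by (simp add: norm_power zeta_def norm_exp_eq_Re)

lemma zeta_eq_1: "N \<ge> 1 \<Longrightarrow> zeta N ^ d = 1 \<longleftrightarrow> N dvd d"
  unfolding zeta_pow by (rule complex_root_unity_eq_1)

lemma zeta_geo: assumes N: "N \<ge> 1"
  shows "(\<Sum>a<N. (zeta N ^ d) ^ a) = (if N dvd d then of_nat N else 0)"
proof (cases "N dvd d")
  case True
  then have "zeta N ^ d = 1" using zeta_eq_1[OF N] by simp
  then show ?thesis using True by simp
next
  case False
  then have q1: "zeta N ^ d \<noteq> 1" using zeta_eq_1[OF N] by simp
  have "(zeta N ^ d) ^ N = (zeta N ^ N) ^ d" by (simp add: power_mult[symmetric] mult.commute)
  also have "zeta N ^ N = 1" using zeta_eq_1[OF N] by simp
  finally have qN: "(zeta N ^ d) ^ N = 1" by simp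
  show ?thesis using q1 qN False by (simp add: sum_gp_strict)
qed

definition pt :: "real \<Rightarrow> nat \<Rightarrow> nat \<Rightarrow> (nat \<Rightarrow> nat) \<Rightarrow> (nat \<Rightarrow> nat) \<Rightarrow> nat \<Rightarrow> complex" where
  "pt r N n \<alpha> e = (\<lambda>j. wt r n \<alpha> j * zeta N ^ e j)"

lemma pt_ball:
  assumes r: "r > 1" and rs: "ereal r \<le> s" and \<alpha>: "\<forall>j\<ge>n. \<alpha> j = 0"
  shows "pt r N n \<alpha> e \<in> lball r s n"
proof -
  have w: "wt r n \<alpha> \<in> lball r s n" by (rule wt_ball[OF r rs \<alpha>])
  have "lorentz_norm r s n (pt r N n \<alpha> e) = lorentz_norm r s n (wt r n \<alpha>)"
    by (rule lorentz_cong) (simp add: pt_def norm_mult zeta_norm)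
  moreover have "\<forall>k\<ge>n. pt r N n \<alpha> e k = 0" by (simp add: pt_def wt_def)
  ultimately show ?thesis using w by (simp add: lball_def)
qed

definition phi :: "real \<Rightarrow> nat \<Rightarrow> nat \<Rightarrow> (nat \<Rightarrow> nat) \<Rightarrow> ((nat \<Rightarrow> complex) \<Rightarrow> complex) \<Rightarrow> complex" where
  "phi r N n \<alpha> f = (\<Sum>e\<in>Bx n {..<N}. f (pt r N n \<alpha> e) * (\<Prod>j<n. zeta N ^ ((N - \<alpha> j) * e j)))
      / (of_nat N ^ n * monom n \<alpha> (wt r n \<alpha>))"

lemma phi_bound:
  assumes r: "r > 1" and rs: "ereal r \<le> s" and \<alpha>: "\<forall>j\<ge>n. \<alpha> j = 0" and N: "N \<ge> 1"
    and bdd: "bdd_above ((\<lambda>z. cmod (f z)) ` lball r s n)"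
  shows "cmod (phi r N n \<alpha> f) \<le> gw r n \<alpha> * sup_norm r s n f"
proof -
  define S where "S = sup_norm r s n f"
  have fS: "cmod (f (pt r N n \<alpha> e)) \<le> S" for e
    unfolding S_def sup_norm_def by (rule cSUP_upper[OF pt_ball[OF r rs \<alpha>] bdd])
  have mpos: "cmod (monom n \<alpha> (wt r n \<alpha>)) > 0" using wt_monom_pos(2)[OF \<alpha>] r by simp
  have "cmod (\<Sum>e\<in>Bx n {..<N}. f (pt r N n \<alpha> e) * (\<Prod>j<n. zeta N ^ ((N - \<alpha> j) * e j)))
      \<le> (\<Sum>e\<in>Bx n {..<N}. cmod (f (pt r N n \<alpha> e) * (\<Prod>j<n. zeta N ^ ((N - \<alpha> j) * e j))))"
    by (rule norm_sum)
  also have "\<dots> = (\<Sum>e\<in>Bx n {..<N}. cmod (f (pt r N n \<alpha> e)))"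
    by (simp add: norm_mult prod_norm[symmetric] power_mult zeta_norm norm_power)
  also have "\<dots> \<le> (\<Sum>e\<in>Bx n {..<N}. S)" by (intro sum_mono fS)
  also have "\<dots> = real N ^ n * S" by (simp add: card_Bx)
  finally have A: "cmod (\<Sum>e\<in>Bx n {..<N}. f (pt r N n \<alpha> e) * (\<Prod>j<n. zeta N ^ ((N - \<alpha> j) * e j))) \<le> real N ^ n * S" .
  have "cmod (phi r N n \<alpha> f) = cmod (\<Sum>e\<in>Bx n {..<N}. f (pt r N n \<alpha> e) * (\<Prod>j<n. zeta N ^ ((N - \<alpha> j) * e j)))
        / (real N ^ n * cmod (monom n \<alpha> (wt r n \<alpha>)))"
    by (simp add: phi_def norm_divide norm_mult norm_power)
  also have "\<dots> \<le> real N ^ n * S / (real N ^ n * cmod (monom n \<alpha> (wt r n \<alpha>)))"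
    using A mpos N by (intro divide_right_mono) auto
  also have "\<dots> = gw r n \<alpha> * S" using N by (simp add: gw_def)
  finally show ?thesis by (simp add: S_def)
qed


lemma dvd_shift: fixes a b N :: nat assumes "a < N" "b < N"
  shows "N dvd (b + (N - a)) \<longleftrightarrow> b = a"
proof
  assume "N dvd (b + (N - a))"
  then obtain q where q: "b + (N - a) = N * q" by (auto simp: dvd_def)
  show "b = a"
  proof (cases q)
    case 0 then show ?thesis using q assms by simp
  next
    case (Suc q')
    show ?thesis
    proof (cases q')
      case 0 then show ?thesis using q Suc assms by simp
    next
      case (Suc q'')
      have "N * q \<ge> N + N" using \<open>q = Suc q'\<close> Suc by simp
      then show ?thesis using q assms by simp
    qed
  qed
next
  assume "b = a" then show "N dvd (b + (N - a))" using assms by simp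
qed

lemma monom_pt: "monom n \<beta> (pt r N n \<alpha> e) = monom n \<beta> (wt r n \<alpha>) * (\<Prod>j<n. zeta N ^ (\<beta> j * e j))"
  by (simp add: monom_def pt_def power_mult_distrib prod.distrib power_mult[symmetric] mult.commute)

lemma index_cut_Bx:
  assumes "\<forall>\<beta>\<in>index_cut J n. \<forall>j. \<beta> j < N"
  shows "index_cut J n \<subseteq> Bx n {..<N}"
  using assms by (auto simp: index_cut_def Bx_def)

lemma phi_poly:
  assumes r: "r > 0" and N: "N \<ge> 1" and IB: "\<forall>\<beta>\<in>index_cut J n. \<forall>j. \<beta> j < N"
    and \<alpha>: "\<alpha> \<in> index_cut J n"
  shows "phi r N n \<alpha> (poly_eval J n c) = c \<alpha>"
proof -
  define I where "I = index_cut J n"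
  define w where "w = wt r n \<alpha>"
  have fI: "finite I" unfolding I_def using index_cut_Bx[OF IB] Bx_finite[of "{..<N}" n]
    by (auto intro: finite_subset)
  have \<alpha>0: "\<forall>j\<ge>n. \<alpha> j = 0" using \<alpha> by (simp add: index_cut_def)
  have Mp: "monom n \<alpha> w \<noteq> 0" using wt_monom_pos(2)[OF \<alpha>0 r] by (auto simp: w_def)
  have inner: "(\<Sum>e\<in>Bx n {..<N}. (\<Prod>j<n. zeta N ^ (\<beta> j * e j)) * (\<Prod>j<n. zeta N ^ ((N - \<alpha> j) * e j)))
      = (if \<beta> = \<alpha> then of_nat N ^ n else 0)" if \<beta>: "\<beta> \<in> I" for \<beta>
  proof -
    have "(\<Sum>e\<in>Bx n {..<N}. (\<Prod>j<n. zeta N ^ (\<beta> j * e j)) * (\<Prod>j<n. zeta N ^ ((N - \<alpha> j) * e j)))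
        = (\<Sum>e\<in>Bx n {..<N}. \<Prod>j<n. (zeta N ^ (\<beta> j + (N - \<alpha> j))) ^ e j)"
      by (intro sum.cong refl) (simp add: prod.distrib[symmetric] power_mult_distrib power_mult power_add)
    also have "\<dots> = (\<Prod>j<n. \<Sum>a<N. (zeta N ^ (\<beta> j + (N - \<alpha> j))) ^ a)"
      by (rule Bx_sum_prod) simp
    also have "\<dots> = (\<Prod>j<n. if \<beta> j = \<alpha> j then of_nat N else 0)"
    proof (rule prod.cong[OF refl])
      fix j assume "j \<in> {..<n}"
      have "\<alpha> j < N" "\<beta> j < N" using IB \<alpha> \<beta> by (auto simp: I_def)
      then show "(\<Sum>a<N. (zeta N ^ (\<beta> j + (N - \<alpha> j))) ^ a) = (if \<beta> j = \<alpha> j then of_nat N else 0)"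
        using zeta_geo[OF N] dvd_shift by simp
    qed
    also have "\<dots> = (if \<beta> = \<alpha> then of_nat N ^ n else 0)"
    proof (cases "\<beta> = \<alpha>")
      case True then show ?thesis by simp
    next
      case False
      have \<beta>0: "\<forall>j\<ge>n. \<beta> j = 0" using \<beta> by (simp add: I_def index_cut_def)
      obtain j where j: "\<beta> j \<noteq> \<alpha> j" using False by auto
      then have "j < n" using \<alpha>0 \<beta>0 by (metis not_less)
      then have "(\<Prod>j<n. if \<beta> j = \<alpha> j then (of_nat N :: complex) else 0) = 0"
        using j by (intro prod_zero) auto
      then show ?thesis using False by simp
    qed
    finally show ?thesis .
  qed
  have "(\<Sum>e\<in>Bx n {..<N}. poly_eval J n c (pt r N n \<alpha> e) * (\<Prod>j<n. zeta N ^ ((N - \<alpha> j) * e j)))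
      = (\<Sum>e\<in>Bx n {..<N}. \<Sum>\<beta>\<in>I. c \<beta> * monom n \<beta> w * ((\<Prod>j<n. zeta N ^ (\<beta> j * e j)) * (\<Prod>j<n. zeta N ^ ((N - \<alpha> j) * e j))))"
    by (simp add: poly_eval_def I_def monom_pt w_def sum_distrib_right mult.assoc)
  also have "\<dots> = (\<Sum>\<beta>\<in>I. c \<beta> * monom n \<beta> w * (\<Sum>e\<in>Bx n {..<N}. (\<Prod>j<n. zeta N ^ (\<beta> j * e j)) * (\<Prod>j<n. zeta N ^ ((N - \<alpha> j) * e j))))"
    by (subst sum.swap) (simp add: sum_distrib_left)
  also have "\<dots> = (\<Sum>\<beta>\<in>I. if \<beta> = \<alpha> then c \<beta> * monom n \<beta> w * of_nat N ^ n else 0)"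
    by (intro sum.cong refl) (simp add: inner)
  also have "\<dots> = c \<alpha> * monom n \<alpha> w * of_nat N ^ n"
    using \<alpha> fI by (simp add: I_def)
  finally show ?thesis using Mp N by (simp add: phi_def w_def)
qed


lemma zero_ball: assumes "r > 1" "ereal r \<le> s" shows "(\<lambda>_. 0) \<in> lball r s n"
  by (rule lr_ball[OF assms]) (use assms in auto)

definition Rb :: "real \<Rightarrow> ereal \<Rightarrow> nat \<Rightarrow> real" where
  "Rb r s n = max 1 ((1 + ln (real n)) powr (r * bb r s))"

lemma coord_bound:
  assumes r: "r > 1" and rs: "ereal r \<le> s" and n: "n \<ge> 1" and z: "z \<in> lball r s n"
  shows "cmod (z j) \<le> Rb r s n"
proof (cases "j < n")
  case False
  then have "z j = 0" using z by (simp add: lball_def)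
  then show ?thesis by (simp add: Rb_def)
next
  case True
  have "cmod (z j) powr r \<le> (\<Sum>i<n. cmod (z i) powr r)"
    using True by (intro member_le_sum) auto
  also have "\<dots> \<le> (1 + ln (real n)) powr (r * bb r s)"
    using ball_lr[OF r rs z n] by (simp add: bb_def)
  finally have A: "cmod (z j) powr r \<le> (1 + ln (real n)) powr (r * bb r s)" .
  show ?thesis
  proof (cases "cmod (z j) \<le> 1")
    case True then show ?thesis by (simp add: Rb_def)
  next
    case False
    then have "cmod (z j) powr 1 \<le> cmod (z j) powr r" using r by (intro powr_mono) auto
    then show ?thesis using A False by (simp add: Rb_def)
  qed
qed

lemma monom_le:
  assumes r: "r > 1" and rs: "ereal r \<le> s" and n: "n \<ge> 1" and z: "z \<in> lball r s n"
  shows "cmod (monom n \<alpha> z) \<le> Rb r s n ^ (\<Sum>j<n. \<alpha> j)"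
proof -
  have "cmod (monom n \<alpha> z) = (\<Prod>j<n. cmod (z j) ^ \<alpha> j)" by (rule cmod_monom)
  also have "\<dots> \<le> (\<Prod>j<n. Rb r s n ^ \<alpha> j)"
    using coord_bound[OF r rs n z] by (intro prod_mono conjI power_mono) auto
  also have "\<dots> = Rb r s n ^ (\<Sum>j<n. \<alpha> j)" by (simp add: power_sum)
  finally show ?thesis .
qed

lemma monom_bdd:
  assumes r: "r > 1" and rs: "ereal r \<le> s" and n: "n \<ge> 1"
  shows "bdd_above ((\<lambda>z. cmod (monom n \<alpha> z)) ` lball r s n)"
  using monom_le[OF r rs n] by (intro bdd_aboveI2) blast

lemma poly_le:
  assumes r: "r > 1" and rs: "ereal r \<le> s" and n: "n \<ge> 1" and z: "z \<in> lball r s n"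
  shows "cmod (poly_eval J n c z) \<le> (\<Sum>\<beta>\<in>index_cut J n. cmod (c \<beta>) * Rb r s n ^ (\<Sum>j<n. \<beta> j))"
proof -
  have "cmod (poly_eval J n c z) \<le> (\<Sum>\<beta>\<in>index_cut J n. cmod (c \<beta> * monom n \<beta> z))"
    unfolding poly_eval_def by (rule norm_sum)
  also have "\<dots> \<le> (\<Sum>\<beta>\<in>index_cut J n. cmod (c \<beta>) * Rb r s n ^ (\<Sum>j<n. \<beta> j))"
    using monom_le[OF r rs n z] by (intro sum_mono) (auto simp: norm_mult intro: mult_left_mono)
  finally show ?thesis .
qed

lemma poly_bdd:
  assumes r: "r > 1" and rs: "ereal r \<le> s" and n: "n \<ge> 1"
  shows "bdd_above ((\<lambda>z. cmod (poly_eval J n c z)) ` lball r s n)"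
  using poly_le[OF r rs n] by (intro bdd_aboveI2) blast

lemma c_coef_le:
  assumes r: "r > 1" and rs: "ereal r \<le> s" and n: "n \<ge> 1" and \<alpha>: "\<forall>j\<ge>n. \<alpha> j = 0"
  shows "c_coef r s n \<alpha> \<le> gw r n \<alpha>"
proof -
  have mp: "cmod (monom n \<alpha> (wt r n \<alpha>)) > 0" using wt_monom_pos(2)[OF \<alpha>] r by simp
  have "cmod (monom n \<alpha> (wt r n \<alpha>)) \<le> (SUP z\<in>lball r s n. cmod (monom n \<alpha> z))"
    by (rule cSUP_upper[OF wt_ball[OF r rs \<alpha>] monom_bdd[OF r rs n]])
  moreover have "0 < (SUP z\<in>lball r s n. cmod (monom n \<alpha> z)) * cmod (monom n \<alpha> (wt r n \<alpha>))"
  proof (rule mult_pos_pos)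
    show "0 < (SUP z\<in>lball r s n. cmod (monom n \<alpha> z))" using calculation mp by linarith
  qed (rule mp)
  ultimately show ?thesis unfolding c_coef_def gw_def using mp
    by (intro divide_left_mono) auto
qed

lemma sup_from_coeffs:
  assumes r: "r > 1" and rs: "ereal r \<le> s"
    and M: "\<forall>z\<in>lball r s n. (\<Sum>\<alpha>\<in>index_cut J n. gw r n \<alpha> * cmod (monom n \<alpha> z)) \<le> K"
    and co: "\<forall>\<alpha>\<in>index_cut J n. cmod (d \<alpha>) \<le> gw r n \<alpha> * S" and S: "S \<ge> 0"
  shows "sup_norm r s n (poly_eval J n d) \<le> K * S"
  unfolding sup_norm_def
proof (rule cSUP_least)
  show "lball r s n \<noteq> {}" using zero_ball[OF r rs] by blast
  fix z assume z: "z \<in> lball r s n"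
  have "cmod (poly_eval J n d z) \<le> (\<Sum>\<alpha>\<in>index_cut J n. cmod (d \<alpha> * monom n \<alpha> z))"
    unfolding poly_eval_def by (rule norm_sum)
  also have "\<dots> \<le> (\<Sum>\<alpha>\<in>index_cut J n. gw r n \<alpha> * S * cmod (monom n \<alpha> z))"
    using co by (intro sum_mono) (auto simp: norm_mult intro: mult_right_mono)
  also have "\<dots> = S * (\<Sum>\<alpha>\<in>index_cut J n. gw r n \<alpha> * cmod (monom n \<alpha> z))"
    by (simp add: sum_distrib_left mult_ac)
  also have "\<dots> \<le> S * K" using M z S by (intro mult_left_mono) auto
  finally show "cmod (poly_eval J n d z) \<le> K * S" by (simp add: mult.commute)
qed


lemma phi_linear:
  "phi r N n \<alpha> (\<lambda>w. a * f w + b * g w) = a * phi r N n \<alpha> f + b * phi r N n \<alpha> g"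
  by (simp add: phi_def ring_distribs sum.distrib sum_distrib_left add_divide_distrib mult.assoc)

lemma final:
  assumes r: "1 < r" "r \<le> 2" and rs: "ereal r \<le> s"
    and HJ: "\<forall>\<alpha>\<in>J. deg \<alpha> \<le> m" and n1: "n \<ge> 1"
    and hyp: "real n \<le> exp 1 * ln (real n) powr (conj_exp r * (1/r - inv_s s)) * real m"
  shows "hat_lambda r s J n \<le> Cst r s ^ m * ln (real n) powr (real m * (1/r - inv_s s))
       \<and> chi_mon r s J n \<le> Cst r s ^ m * ln (real n) powr (real m * (1/r - inv_s s))
       \<and> proj_const r s J n \<le> Cst r s ^ m * ln (real n) powr (real m * (1/r - inv_s s))"
proof -
  have hyp': "real n \<le> exp 1 * ln (real n) powr (conj_exp r * bb r s) * real m"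
    using hyp by (simp add: bb_def)
  have n: "n \<ge> 2"
  proof (rule ccontr)
    assume "\<not> n \<ge> 2" then have "n = 1" using n1 by simp
    then show False using hyp by simp
  qed
  have m: "m \<ge> 1"
  proof (rule ccontr)
    assume "\<not> m \<ge> 1" then have "m = 0" by simp
    then show False using hyp n by simp
  qed
  define I where "I = index_cut J n"
  define N where "N = Suc m"
  have N: "N \<ge> 1" by (simp add: N_def)
  define K where "K = Cst r s ^ m * (ln (real n) powr bb r s) ^ m"
  have K0: "K \<ge> 0" using Cst_pos[of r s] by (simp add: K_def)
  have Keq: "K = Cst r s ^ m * ln (real n) powr (real m * (1/r - inv_s s))"
  proof -
    have Lp: "ln (real n) > 0" using n by simp
    have "(ln (real n) powr bb r s) ^ m = (ln (real n) powr bb r s) powr real m"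
      using Lp by (simp add: powr_realpow)
    also have "\<dots> = ln (real n) powr (real m * (1/r - inv_s s))"
      by (simp add: powr_powr bb_def mult.commute)
    finally show ?thesis by (simp add: K_def)
  qed
  have Isub: "I \<subseteq> {\<alpha>. (\<forall>j\<ge>n. \<alpha> j = 0) \<and> deg \<alpha> \<le> m}"
    using HJ by (auto simp: I_def index_cut_def)
  have IB: "\<forall>\<beta>\<in>index_cut J n. \<forall>j. \<beta> j < N"
  proof (intro ballI allI)
    fix \<beta> j assume \<beta>: "\<beta> \<in> index_cut J n"
    then have b0: "\<forall>j\<ge>n. \<beta> j = 0" and bd: "deg \<beta> \<le> m" using HJ by (auto simp: index_cut_def)
    show "\<beta> j < N"
    proof (cases "j < n")
      case True
      have "\<beta> j \<le> (\<Sum>j<n. \<beta> j)" using True by (intro member_le_sum) auto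
      then show ?thesis using bd deg_eq[OF b0] by (simp add: N_def)
    next
      case False then show ?thesis using b0 by (simp add: N_def)
    qed
  qed
  have fI: "finite (index_cut J n)"
    using index_cut_Bx[OF IB] Bx_finite[of "{..<N}" n] by (auto intro: finite_subset)
  have M: "\<forall>z\<in>lball r s n. (\<Sum>\<alpha>\<in>index_cut J n. gw r n \<alpha> * cmod (monom n \<alpha> z)) \<le> K"
    using main_est[OF r rs n m _ hyp' Isub] by (simp add: K_def I_def)
  have nonempty: "lball r s n \<noteq> {}" using zero_ball[OF r(1) rs] by blast
  have supn0: "sup_norm r s n f \<ge> 0" if "bdd_above ((\<lambda>z. cmod (f z)) ` lball r s n)" for f
  proof -
    have "cmod (f (\<lambda>_. 0)) \<le> sup_norm r s n f"
      unfolding sup_norm_def by (rule cSUP_upper[OF zero_ball[OF r(1) rs] that])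
    then show ?thesis by (meson norm_ge_zero order_trans)
  qed
  have coef: "cmod (phi r N n \<alpha> f) \<le> gw r n \<alpha> * sup_norm r s n f"
    if "\<alpha> \<in> index_cut J n" "bdd_above ((\<lambda>z. cmod (f z)) ` lball r s n)" for \<alpha> f
    using phi_bound[OF r(1) rs _ N that(2)] that(1) by (simp add: index_cut_def)
  have A: "hat_lambda r s J n \<le> K"
    unfolding hat_lambda_def
  proof (rule cSUP_least[OF nonempty])
    fix z assume z: "z \<in> lball r s n"
    have "(\<Sum>\<alpha>\<in>index_cut J n. c_coef r s n \<alpha> * cmod (monom n \<alpha> z))
        \<le> (\<Sum>\<alpha>\<in>index_cut J n. gw r n \<alpha> * cmod (monom n \<alpha> z))"
      using c_coef_le[OF r(1) rs n1] by (intro sum_mono mult_right_mono) (auto simp: index_cut_def)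
    also have "\<dots> \<le> K" using M z by blast
    finally show "(\<Sum>\<alpha>\<in>index_cut J n. c_coef r s n \<alpha> * cmod (monom n \<alpha> z)) \<le> K" .
  qed
  have B: "chi_mon r s J n \<le> K"
    unfolding chi_mon_def
  proof (rule cInf_lower, goal_cases)
    case 1
    show ?case
    proof (rule CollectI, intro conjI allI impI)
      show "0 \<le> K" by (rule K0)
      fix c :: "(nat \<Rightarrow> nat) \<Rightarrow> complex" and \<theta> :: "(nat \<Rightarrow> nat) \<Rightarrow> complex"
      assume \<theta>: "\<forall>\<alpha>. cmod (\<theta> \<alpha>) = 1"
      have bd: "bdd_above ((\<lambda>z. cmod (poly_eval J n c z)) ` lball r s n)" by (rule poly_bdd[OF r(1) rs n1])
      show "sup_norm r s n (poly_eval J n (\<lambda>\<alpha>. \<theta> \<alpha> * c \<alpha>)) \<le> K * sup_norm r s n (poly_eval J n c)"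
      proof (rule sup_from_coeffs[OF r(1) rs M])
        show "0 \<le> sup_norm r s n (poly_eval J n c)" by (rule supn0[OF bd])
        show "\<forall>\<alpha>\<in>index_cut J n. cmod (\<theta> \<alpha> * c \<alpha>) \<le> gw r n \<alpha> * sup_norm r s n (poly_eval J n c)"
        proof
          fix \<alpha> assume \<alpha>: "\<alpha> \<in> index_cut J n"
          have "cmod (\<theta> \<alpha> * c \<alpha>) = cmod (phi r N n \<alpha> (poly_eval J n c))"
            using phi_poly[OF _ N IB \<alpha>, where r=r and c=c] r \<theta> by (simp add: norm_mult)
          also have "\<dots> \<le> gw r n \<alpha> * sup_norm r s n (poly_eval J n c)" by (rule coef[OF \<alpha> bd])
          finally show "cmod (\<theta> \<alpha> * c \<alpha>) \<le> gw r n \<alpha> * sup_norm r s n (poly_eval J n c)" .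
        qed
      qed
    qed
  next
    case 2
    show ?case by (rule bdd_belowI[of _ 0]) auto
  qed
  have C: "proj_const r s J n \<le> K"
    unfolding proj_const_def
  proof (rule cInf_lower, goal_cases)
    case 1
    define Q where "Q = (\<lambda>f. poly_eval J n (\<lambda>\<alpha>. phi r N n \<alpha> f))"
    show ?case
    proof (rule CollectI, intro conjI exI[of _ Q])
      show "0 \<le> K" by (rule K0)
      show "\<forall>f g a b. bdd_above ((\<lambda>z. cmod (f z)) ` lball r s n) \<longrightarrow>
                   bdd_above ((\<lambda>z. cmod (g z)) ` lball r s n) \<longrightarrow>
           (\<forall>z\<in>lball r s n. Q (\<lambda>w. a * f w + b * g w) z = a * Q f z + b * Q g z)"
        by (simp add: Q_def poly_eval_def phi_linear ring_distribs sum.distrib sum_distrib_left mult.assoc)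
      show "\<forall>f. bdd_above ((\<lambda>z. cmod (f z)) ` lball r s n) \<longrightarrow>
           (\<exists>c. \<forall>z\<in>lball r s n. Q f z = poly_eval J n c z)"
        by (auto simp: Q_def)
      show "\<forall>c. \<forall>z\<in>lball r s n. Q (poly_eval J n c) z = poly_eval J n c z"
      proof (intro allI ballI)
        fix c :: "(nat \<Rightarrow> nat) \<Rightarrow> complex" and z assume "z \<in> lball r s n"
        show "Q (poly_eval J n c) z = poly_eval J n c z"
          unfolding Q_def poly_eval_def[of J n "\<lambda>\<alpha>. phi r N n \<alpha> (poly_eval J n c)"]
          using phi_poly[OF _ N IB, where r=r and c=c] r by (simp add: poly_eval_def[of J n c])
      qed
      show "\<forall>f. bdd_above ((\<lambda>z. cmod (f z)) ` lball r s n) \<longrightarrow>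
           sup_norm r s n (Q f) \<le> K * sup_norm r s n f"
      proof (intro allI impI)
        fix f assume bd: "bdd_above ((\<lambda>z. cmod (f z)) ` lball r s n)"
        show "sup_norm r s n (Q f) \<le> K * sup_norm r s n f"
          unfolding Q_def
        proof (rule sup_from_coeffs[OF r(1) rs M])
          show "0 \<le> sup_norm r s n f" by (rule supn0[OF bd])
          show "\<forall>\<alpha>\<in>index_cut J n. cmod (phi r N n \<alpha> f) \<le> gw r n \<alpha> * sup_norm r s n f"
            using coef bd by blast
        qed
      qed
    qed
  next
    case 2
    show ?case by (rule bdd_belowI[of _ 0]) auto
  qed
  show ?thesis using A B C Keq by simp
qed

theorem theorem3p21:
  fixes r :: real and s :: ereal
  assumes "1 < r" and "r \<le> 2" and "ereal r \<le> s"
  shows "\<exists>C>0. \<forall>(J :: nat \<Rightarrow> (nat \<Rightarrow> nat) set).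
           (\<forall>m. is_index_set (J m) \<and> (\<forall>\<alpha>\<in>J m. deg \<alpha> \<le> m)) \<longrightarrow>
           (\<forall>m n. n \<ge> 1 \<longrightarrow>
              real n \<le> exp 1 * ln (real n) powr (conj_exp r * (1/r - inv_s s)) * real m \<longrightarrow>
                hat_lambda r s (J m) n \<le> C ^ m * ln (real n) powr (real m * (1/r - inv_s s))
              \<and> chi_mon r s (J m) n \<le> C ^ m * ln (real n) powr (real m * (1/r - inv_s s))
              \<and> proj_const r s (J m) n \<le> C ^ m * ln (real n) powr (real m * (1/r - inv_s s)))"
proof (rule exI[of _ "Cst r s"], rule conjI[OF Cst_pos], intro allI impI)
  fix J :: "nat \<Rightarrow> (nat \<Rightarrow> nat) set" and m n :: nat
  assume HJ: "\<forall>m. is_index_set (J m) \<and> (\<forall>\<alpha>\<in>J m. deg \<alpha> \<le> m)" and n: "1 \<le> n"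
    and hyp: "real n \<le> exp 1 * ln (real n) powr (conj_exp r * (1/r - inv_s s)) * real m"
  have "\<forall>\<alpha>\<in>J m. deg \<alpha> \<le> m" using HJ by blast
  then show "hat_lambda r s (J m) n \<le> Cst r s ^ m * ln (real n) powr (real m * (1/r - inv_s s))
              \<and> chi_mon r s (J m) n \<le> Cst r s ^ m * ln (real n) powr (real m * (1/r - inv_s s))
              \<and> proj_const r s (J m) n \<le> Cst r s ^ m * ln (real n) powr (real m * (1/r - inv_s s))"
    using final[OF assms(1,2,3) _ n hyp] by blast
qed

end
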